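(* In the standing setting, under Assumption 1, for every $y\in\operatorname{int}Q$, $$\|[\nabla^2f(y)]^{-1}\|_G:=\max_{h\in\mathbb H^*,\|h\|_G=1}\|[\nabla^2f(y)]^{-1}h\|_G\le\frac4{\gamma_d^2}[f^*-\langle b,y\rangle]^2,$$ and $\|v(y)\|_G\le\frac{2\nu^{1/2}}{\gamma_d}[f^*-\langle b,y\rangle]$.
   Context: Standing setting: $\mathbb E,\mathbb H$ finite-dimensional real spaces with duals, pairing $\langle\cdot,\cdot\rangle$; $K\subset\mathbb E$ a regular cone with dual cone $K^*$; $F$ a $\nu$-normal barrier for $K$ and $F_*(s)=\max_{x\in\operatorname{int}K}\{-\langle s,x\rangle-F(x)\}$ its dual barrier. $A:\mathbb E\to\mathbb H^*$ linear, $c\in\mathbb E^*$, $b\in\mathbb H^*$; primal $\min\{\langle c,x\rangle:Ax=b,x\in K\}$, dual $\max\{\langle b,y\rangle:s+A^*y=c,s\in K^*\}$, both strictly feasible; $f^*$ optimal dual value. Central path: $(x_\mu,s_\mu,y_\mu)$ with $Ax_\mu=b$, $s_\mu+A^*y_\mu=c$, $s_\mu=-\mu\nabla F(x_\mu)$. $s(y)=c-A^*y$, $Q=\{y:s(y)\in K^*\}$, $f(y)=F_*(s(y))$, $v(y)=[\nabla^2f(y)]^{-1}\nabla f(y)$. $B=\nabla^2F(x_1)$, $G=AB^{-1}A^*$, $\|y\|_G=\langle Gy,y\rangle^{1/2}$ ($y\in\mathbb H$), $\|g\|_G=\langle g,G^{-1}g\rangle^{1/2}$ ($g\in\mathbb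 H^*$). Assumption 1: there are an optimal dual pair $(s_*,y_* )$ and $\gamma_d>0$ with $f^*-\langle b,y\rangle\ge\gamma_d\|y-y_*\|_G$ for all $y\in Q$. *)

theory Defs
  imports "HOL-Analysis.Analysis"
begin

text \<open>Finite-dimensional real spaces E, H are modelled by euclidean_space types;
  their duals are identified with the spaces themselves via the inner product.\<close>

definition regular_cone :: "'a::euclidean_space set \<Rightarrow> bool" where
  "regular_cone K \<longleftrightarrow> closed K \<and> convex K \<and> cone K \<and> interior K \<noteq> {} \<and>
     (\<forall>x. x \<in> K \<and> - x \<in> K \<longrightarrow> x = 0)"

definition dual_cone :: "'a::euclidean_space set \<Rightarrow> 'a set" where
  "dual_cone K = {s. \<forall>x\<in>K. 0 \<le> s \<bullet> x}"

definition grad :: "('a::euclidean_space \<Rightarrow> real) \<Rightarrow> 'a \<Rightarrow> 'a" where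
  "grad f x = (THE g. (f has_derivative (\<lambda>u. g \<bullet> u)) (at x))"

definition hess :: "('a::euclidean_space \<Rightarrow> real) \<Rightarrow> 'a \<Rightarrow> 'a \<Rightarrow> 'a" where
  "hess f x = frechet_derivative (grad f) (at x)"

definition normal_barrier :: "real \<Rightarrow> 'a::euclidean_space set \<Rightarrow> ('a \<Rightarrow> real) \<Rightarrow> bool" where
  "normal_barrier \<nu> K F \<longleftrightarrow>
     (\<exists>F1 F2 (F3 :: 'a \<Rightarrow> 'a \<Rightarrow>\<^sub>L ('a \<Rightarrow>\<^sub>L 'a)).
        (\<forall>x\<in>interior K.
           (F has_derivative (\<lambda>u. F1 x \<bullet> u)) (at x) \<and>
           (F1 has_derivative blinfun_apply (F2 x)) (at x) \<and>
           (F2 has_derivative blinfun_apply (F3 x)) (at x)) \<and>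
        continuous_on (interior K) F3 \<and>
        (\<forall>x\<in>interior K. \<forall>u.
           \<bar>blinfun_apply (blinfun_apply (F3 x) u) u \<bullet> u\<bar>
              \<le> 2 * (blinfun_apply (F2 x) u \<bullet> u) powr (3/2) \<and>
           (F1 x \<bullet> u)\<^sup>2 \<le> \<nu> * (blinfun_apply (F2 x) u \<bullet> u))) \<and>
     convex_on (interior K) F \<and>
     (\<forall>x\<in>frontier K. filterlim F at_top (at x within interior K)) \<and>
     (\<forall>x\<in>interior K. \<forall>t>0. F (t *\<^sub>R x) = F x - \<nu> * ln t)"

definition dual_barrier :: "'a::euclidean_space set \<Rightarrow> ('a \<Rightarrow> real) \<Rightarrow> 'a \<Rightarrow> real" where
  "dual_barrier K F s = (SUP x\<in>interior K. - (s \<bullet> x) - F x)"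

definition Gmap :: "('e::euclidean_space \<Rightarrow> 'h::euclidean_space) \<Rightarrow> ('e \<Rightarrow> 'e) \<Rightarrow> 'h \<Rightarrow> 'h" where
  "Gmap A B = (\<lambda>y. A (inv B (adjoint A y)))"

definition G_norm_primal :: "('e::euclidean_space \<Rightarrow> 'h::euclidean_space) \<Rightarrow> ('e \<Rightarrow> 'e) \<Rightarrow> 'h \<Rightarrow> real" where
  "G_norm_primal A B y = sqrt (Gmap A B y \<bullet> y)"

definition G_norm_dual :: "('e::euclidean_space \<Rightarrow> 'h::euclidean_space) \<Rightarrow> ('e \<Rightarrow> 'e) \<Rightarrow> 'h \<Rightarrow> real" where
  "G_norm_dual A B g = sqrt (g \<bullet> inv (Gmap A B) g)"

definition G_opnorm :: "('e::euclidean_space \<Rightarrow> 'h::euclidean_space) \<Rightarrow> ('e \<Rightarrow> 'e) \<Rightarrow> ('h \<Rightarrow> 'h) \<Rightarrow> real" where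
  "G_opnorm A B T = Sup {G_norm_primal A B (T h) | h. G_norm_dual A B h = 1}"

end

theory Submission
  imports Defs
begin


lemma line_has_derivative:
  fixes f :: "'a::real_normed_vector \<Rightarrow> 'b::real_normed_vector"
  assumes "(f has_derivative f') (at (x + t *\<^sub>R u))"
  shows "((\<lambda>t. f (x + t *\<^sub>R u)) has_derivative (\<lambda>h. f' (h *\<^sub>R u))) (at t)"
proof -
  have "((\<lambda>t. x + t *\<^sub>R u) has_derivative (\<lambda>h. h *\<^sub>R u)) (at t)"
    by (auto intro!: derivative_eq_intros)
  from has_derivative_compose[OF this assms] show ?thesis by (simp add: o_def)
qed

lemma line_real_deriv:
  fixes f :: "'a::real_normed_vector \<Rightarrow> real"
  assumes "(f has_derivative f') (at (x + t *\<^sub>R u))"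
  shows "((\<lambda>t. f (x + t *\<^sub>R u)) has_real_derivative f' u) (at t)"
proof -
  have lin: "linear f'" using assms has_derivative_linear by blast
  have "(\<lambda>h. f' (h *\<^sub>R u)) = (\<lambda>h. h * f' u)"
    using linear_cmul[OF lin] by (auto simp: mult.commute)
  with line_has_derivative[OF assms] show ?thesis
    by (simp add: has_field_derivative_def mult.commute[of _ "f' u"])
qed

locale nbar =
  fixes K :: "'a::euclidean_space set" and F :: "'a \<Rightarrow> real" and \<nu> :: real
    and F1 :: "'a \<Rightarrow> 'a" and F2 :: "'a \<Rightarrow> 'a \<Rightarrow>\<^sub>L 'a" and F3 :: "'a \<Rightarrow> 'a \<Rightarrow>\<^sub>L ('a \<Rightarrow>\<^sub>L 'a)"
  assumes K: "regular_cone K"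
  and d1: "\<And>x. x \<in> interior K \<Longrightarrow> (F has_derivative (\<lambda>u. F1 x \<bullet> u)) (at x)"
  and d2: "\<And>x. x \<in> interior K \<Longrightarrow> (F1 has_derivative blinfun_apply (F2 x)) (at x)"
  and d3: "\<And>x. x \<in> interior K \<Longrightarrow> (F2 has_derivative blinfun_apply (F3 x)) (at x)"
  and sc: "\<And>x u. x \<in> interior K \<Longrightarrow>
           \<bar>blinfun_apply (blinfun_apply (F3 x) u) u \<bullet> u\<bar>
              \<le> 2 * (blinfun_apply (F2 x) u \<bullet> u) powr (3/2)"
  and nuc: "\<And>x u. x \<in> interior K \<Longrightarrow> (F1 x \<bullet> u)\<^sup>2 \<le> \<nu> * (blinfun_apply (F2 x) u \<bullet> u)"
  and conv: "convex_on (interior K) F"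
  and bar: "\<And>x. x\<in>frontier K \<Longrightarrow> filterlim F at_top (at x within interior K)"
  and hom: "\<And>x t. x\<in>interior K \<Longrightarrow> t>0 \<Longrightarrow> F (t *\<^sub>R x) = F x - \<nu> * ln t"
begin

abbreviation "U \<equiv> interior K"
abbreviation "H x u \<equiv> blinfun_apply (F2 x) u"

lemma closedK: "closed K" and convexK: "convex K" and coneK: "cone K"
  and intK: "U \<noteq> {}" and pointed: "\<And>x. x \<in> K \<Longrightarrow> - x \<in> K \<Longrightarrow> x = 0"
  using K unfolding regular_cone_def by auto

lemma openU: "open U" by simp
lemma convexU: "convex U" by (simp add: convexK convex_interior)
lemma UK: "x \<in> U \<Longrightarrow> x \<in> K" using interior_subset by blast

lemma cone_scale: "x \<in> K \<Longrightarrow> c \<ge> 0 \<Longrightarrow> c *\<^sub>R x \<in> K"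
  using coneK unfolding cone_def by blast

lemma K_add: assumes "a \<in> K" "b \<in> K" shows "a + b \<in> K"
proof -
  have "(1/2) *\<^sub>R a + (1/2) *\<^sub>R b \<in> K"
    using convexK assms unfolding convex_def by auto
  from cone_scale[OF this, of 2] show ?thesis by (simp add: scaleR_right_distrib)
qed

lemma U_scale: assumes "x \<in> U" "t > 0" shows "t *\<^sub>R x \<in> U"
proof -
  obtain e where e: "e > 0" "ball x e \<subseteq> K" using assms(1) mem_interior by blast
  have "ball (t *\<^sub>R x) (t * e) \<subseteq> K"
  proof
    fix y assume y: "y \<in> ball (t *\<^sub>R x) (t * e)"
    have "dist x ((1/t) *\<^sub>R y) = (1/t) * dist (t *\<^sub>R x) y"
    proof -
      have "x - (1/t) *\<^sub>R y = (1/t) *\<^sub>R (t *\<^sub>R x - y)" using assms(2) by (simp add: algebra_simps)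
      then show ?thesis using assms(2) by (simp add: dist_norm)
    qed
    also have "\<dots> < (1/t) * (t * e)" using y assms(2) by (simp add: dist_commute divide_simps mult.commute)
    finally have "(1/t) *\<^sub>R y \<in> K" using e assms(2) by auto
    from cone_scale[OF this, of t] assms(2) show "y \<in> K" by simp
  qed
  then show ?thesis using e assms(2) mem_interior by (metis mult_pos_pos)
qed

lemma U_add: assumes "x \<in> U" "z \<in> K" shows "x + z \<in> U"
proof -
  obtain e where e: "e > 0" "ball x e \<subseteq> K" using assms(1) mem_interior by blast
  have "ball (x + z) e \<subseteq> K"
  proof
    fix y assume "y \<in> ball (x + z) e"
    then have "y - z \<in> ball x e" by (simp add: dist_norm algebra_simps)
    then have "y - z \<in> K" using e by auto
    from K_add[OF this assms(2)] show "y \<in> K" by simp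
  qed
  then show ?thesis using e mem_interior by blast
qed

lemma zero_notin_U: "0 \<notin> U"
proof
  assume "0 \<in> U"
  then obtain e where e: "e > 0" "ball 0 e \<subseteq> K" using mem_interior by blast
  obtain b :: 'a where b: "b \<in> Basis" using nonempty_Basis by blast
  have nb: "norm b = 1" using b by simp
  let ?v = "(e/2) *\<^sub>R b"
  have "?v \<in> K" "- ?v \<in> K" using e nb by (auto simp: dist_norm)
  with pointed have "?v = 0" by blast
  then show False using e b by auto
qed

lemma zero_in_K: "0 \<in> K"
proof -
  obtain x where "x \<in> U" using intK by blast
  from cone_scale[OF UK[OF this], of 0] show ?thesis by simp
qed

lemma zero_frontier: "0 \<in> frontier K"
  using zero_notin_U zero_in_K closedK by (simp add: frontier_def)

lemma no_bounded_approach: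
  assumes p: "p \<in> frontier K" and lim: "filterlim \<gamma> (at p within U) Fl" and nb: "Fl \<noteq> bot"
    and ev: "eventually (\<lambda>t. F (\<gamma> t) \<le> M) Fl"
  shows False
proof -
  have "filterlim (\<lambda>t. F (\<gamma> t)) at_top Fl"
    using filterlim_compose[OF bar[OF p] lim] .
  then have "eventually (\<lambda>t. F (\<gamma> t) > M) Fl" by (simp add: filterlim_at_top_dense)
  with ev have "eventually (\<lambda>t. False) Fl" by eventually_elim auto
  with nb show False by simp
qed

lemma nu_pos: "\<nu> > 0"
proof (rule ccontr)
  assume "\<not> \<nu> > 0"
  then have nu: "\<nu> \<le> 0" by simp
  obtain x0 where x0: "x0 \<in> U" using intK by blast
  have x0nz: "x0 \<noteq> 0" using x0 zero_notin_U by auto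
  show False
  proof (rule no_bounded_approach[OF zero_frontier, of "\<lambda>t. t *\<^sub>R x0" "at_right 0" "F x0"])
    show "filterlim (\<lambda>t. t *\<^sub>R x0) (at 0 within U) (at_right 0)"
      unfolding filterlim_at
    proof
      show "\<forall>\<^sub>F t in at_right 0. t *\<^sub>R x0 \<in> U \<and> t *\<^sub>R x0 \<noteq> 0"
        using eventually_at_right_less[of 0] by eventually_elim (use x0 x0nz U_scale in auto)
      have "((\<lambda>t. t *\<^sub>R x0) \<longlongrightarrow> 0 *\<^sub>R x0) (at_right 0)"
        by (intro tendsto_intros)
      then show "((\<lambda>t. t *\<^sub>R x0) \<longlongrightarrow> 0) (at_right 0)" by simp
    qed
    show "at_right (0::real) \<noteq> bot" by simp
    have "eventually (\<lambda>t. 0 < t \<and> t < 1) (at_right (0::real))"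
      by (simp add: eventually_at_right_less eventually_conj eventually_at_right_field) (meson less_numeral_extra(1))
    then show "\<forall>\<^sub>F t in at_right 0. F (t *\<^sub>R x0) \<le> F x0"
    proof eventually_elim
      case (elim t)
      then have "ln t < 0" by simp
      then have "\<nu> * ln t \<ge> 0" using nu by (simp add: mult_nonpos_nonpos)
      then show ?case using hom[OF x0, of t] elim by simp
    qed
  qed
qed

end


context nbar begin

lemma F1_inner_self: assumes x: "x \<in> U" shows "F1 x \<bullet> x = - \<nu>"
proof -
  have "(F has_derivative (\<lambda>u. F1 x \<bullet> u)) (at (0 + 1 *\<^sub>R x))" using d1[OF x] by simp
  from line_real_deriv[OF this] have D1: "((\<lambda>t. F (t *\<^sub>R x)) has_real_derivative F1 x \<bullet> x) (at 1)" by simp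
  have D2: "((\<lambda>t. F x - \<nu> * ln t) has_real_derivative (0 - \<nu> * (1/1))) (at (1::real))"
    by (auto intro!: derivative_eq_intros)
  have "((\<lambda>t. F (t *\<^sub>R x)) has_real_derivative (0 - \<nu> * (1/1))) (at (1::real))"
    by (rule has_field_derivative_transform_within_open[OF D2, of "{0<..}"]) (use hom[OF x] in auto)
  from DERIV_unique[OF D1 this] show ?thesis by simp
qed

lemma F1_scale: assumes x: "x \<in> U" and t: "t > 0" shows "t *\<^sub>R F1 (t *\<^sub>R x) = F1 x"
proof -
  have tx: "t *\<^sub>R x \<in> U" using U_scale[OF x t] .
  have "((\<lambda>z. t *\<^sub>R z) has_derivative (\<lambda>h. t *\<^sub>R h)) (at x)" by (auto intro!: derivative_eq_intros)
  from has_derivative_compose[OF this d1[OF tx]]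
  have A: "((\<lambda>z. F (t *\<^sub>R z)) has_derivative (\<lambda>h. F1 (t *\<^sub>R x) \<bullet> (t *\<^sub>R h))) (at x)" by (simp add: o_def)
  have "((\<lambda>z. F z - \<nu> * ln t) has_derivative (\<lambda>h. F1 x \<bullet> h - 0)) (at x)"
    by (rule has_derivative_diff[OF d1[OF x] has_derivative_const])
  then have "((\<lambda>z. F (t *\<^sub>R z)) has_derivative (\<lambda>h. F1 x \<bullet> h - 0)) (at x)"
    by (rule has_derivative_transform_within_open[OF _ openU x]) (use hom t in auto)
  from has_derivative_unique[OF A this]
  have "\<And>h. F1 (t *\<^sub>R x) \<bullet> (t *\<^sub>R h) = F1 x \<bullet> h" by (metis diff_zero)
  then have "\<And>h. (t *\<^sub>R F1 (t *\<^sub>R x) - F1 x) \<bullet> h = 0" by (simp add: inner_diff_left)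
  from this[of "t *\<^sub>R F1 (t *\<^sub>R x) - F1 x"] show ?thesis by simp
qed

lemma H_self: assumes x: "x \<in> U" shows "H x x = - F1 x"
proof -
  have "(F1 has_derivative blinfun_apply (F2 x)) (at (0 + 1 *\<^sub>R x))" using d2[OF x] by simp
  from line_has_derivative[OF this]
  have A0: "((\<lambda>t. F1 (t *\<^sub>R x)) has_derivative (\<lambda>h. H x (h *\<^sub>R x))) (at 1)" by simp
  have A: "((\<lambda>t. t *\<^sub>R F1 (t *\<^sub>R x)) has_derivative (\<lambda>h. 1 *\<^sub>R H x (h *\<^sub>R x) + h *\<^sub>R F1 (1 *\<^sub>R x))) (at 1)"
    using has_derivative_scaleR[OF has_derivative_ident A0] by simp
  have "((\<lambda>t. F1 x) has_derivative (\<lambda>h. 0)) (at (1::real))" by simp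
  then have B: "((\<lambda>t. t *\<^sub>R F1 (t *\<^sub>R x)) has_derivative (\<lambda>h. 0)) (at (1::real))"
    by (rule has_derivative_transform_within_open[where s="{0<..}"]) (auto simp: F1_scale[OF x])
  from fun_cong[OF has_derivative_unique[OF A B], of 1] have "H x x + F1 x = 0" by simp
  then show ?thesis by (simp add: eq_neg_iff_add_eq_0)
qed

lemma H_psd: assumes x: "x \<in> U" shows "H x u \<bullet> u \<ge> 0"
proof -
  have "0 \<le> (F1 x \<bullet> u)\<^sup>2" by simp
  also have "\<dots> \<le> \<nu> * (H x u \<bullet> u)" using nuc[OF x] .
  finally show ?thesis using nu_pos by (simp add: zero_le_mult_iff)
qed

lemma mixed:
  assumes h: "h > 0" and inU: "\<And>a b. 0 \<le> a \<Longrightarrow> a \<le> h \<Longrightarrow> 0 \<le> b \<Longrightarrow> b \<le> h \<Longrightarrow> x + a *\<^sub>R u + b *\<^sub>R v \<in> U"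
  shows "\<exists>\<xi> \<eta>. 0 < \<xi> \<and> \<xi> < h \<and> 0 < \<eta> \<and> \<eta> < h \<and>
     F (x + h *\<^sub>R u + h *\<^sub>R v) - F (x + h *\<^sub>R u) - F (x + h *\<^sub>R v) + F x = h\<^sup>2 * (H (x + \<xi> *\<^sub>R u + \<eta> *\<^sub>R v) v \<bullet> u)"
proof -
  have eq1: "\<And>a. x + h *\<^sub>R v + a *\<^sub>R u = x + a *\<^sub>R u + h *\<^sub>R v" by (simp add: algebra_simps)
  have k: "((\<lambda>a. F (x + h *\<^sub>R v + a *\<^sub>R u) - F (x + a *\<^sub>R u)) has_real_derivative
      (F1 (x + h *\<^sub>R v + a *\<^sub>R u) \<bullet> u - F1 (x + a *\<^sub>R u) \<bullet> u)) (at a)" if "0 \<le> a" "a \<le> h" for a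
  proof -
    have m1: "x + h *\<^sub>R v + a *\<^sub>R u \<in> U" unfolding eq1 using inU[OF that, of h] h by simp
    have m2: "x + a *\<^sub>R u \<in> U" using inU[OF that, of 0] h by simp
    show ?thesis
      by (intro DERIV_diff line_real_deriv[of F "\<lambda>w. F1 (x + h *\<^sub>R v + a *\<^sub>R u) \<bullet> w", simplified]
          line_real_deriv[of F "\<lambda>w. F1 (x + a *\<^sub>R u) \<bullet> w", simplified] d1 m1 m2)
  qed
  from MVT2[OF h k] obtain \<xi> where xi: "0 < \<xi>" "\<xi> < h"
    "(F (x + h *\<^sub>R v + h *\<^sub>R u) - F (x + h *\<^sub>R u)) - (F (x + h *\<^sub>R v + 0 *\<^sub>R u) - F (x + 0 *\<^sub>R u))
      = (h - 0) * (F1 (x + h *\<^sub>R v + \<xi> *\<^sub>R u) \<bullet> u - F1 (x + \<xi> *\<^sub>R u) \<bullet> u)" by blast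
  have m: "((\<lambda>b. F1 (x + \<xi> *\<^sub>R u + b *\<^sub>R v) \<bullet> u) has_real_derivative (H (x + \<xi> *\<^sub>R u + b *\<^sub>R v) v \<bullet> u)) (at b)"
    if "0 \<le> b" "b \<le> h" for b
  proof -
    have m1: "x + \<xi> *\<^sub>R u + b *\<^sub>R v \<in> U" using inU[of \<xi> b] xi that by simp
    show ?thesis
      by (rule line_real_deriv[of "\<lambda>z. F1 z \<bullet> u" "\<lambda>w. H (x + \<xi> *\<^sub>R u + b *\<^sub>R v) w \<bullet> u", simplified])
         (rule has_derivative_inner_left[OF d2[OF m1]])
  qed
  from MVT2[OF h m] obtain \<eta> where eta: "0 < \<eta>" "\<eta> < h"
    "F1 (x + \<xi> *\<^sub>R u + h *\<^sub>R v) \<bullet> u - F1 (x + \<xi> *\<^sub>R u + 0 *\<^sub>R v) \<bullet> u = (h - 0) * (H (x + \<xi> *\<^sub>R u + \<eta> *\<^sub>R v) v \<bullet> u)"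
    by blast
  have "F (x + h *\<^sub>R u + h *\<^sub>R v) - F (x + h *\<^sub>R u) - F (x + h *\<^sub>R v) + F x
     = h * (F1 (x + \<xi> *\<^sub>R u + h *\<^sub>R v) \<bullet> u - F1 (x + \<xi> *\<^sub>R u) \<bullet> u)"
    using xi(3) eq1[of h] eq1[of \<xi>] by (simp add: algebra_simps)
  also have "\<dots> = h\<^sup>2 * (H (x + \<xi> *\<^sub>R u + \<eta> *\<^sub>R v) v \<bullet> u)"
    using eta(3) by (simp add: power2_eq_square)
  finally show ?thesis using xi eta by blast
qed

lemma H_close:
  assumes "norm (F2 w - F2 x) \<le> e"
  shows "\<bar>H w a \<bullet> b - H x a \<bullet> b\<bar> \<le> e * (norm a * norm b)"
proof -
  have "\<bar>H w a \<bullet> b - H x a \<bullet> b\<bar> = \<bar>blinfun_apply (F2 w - F2 x) a \<bullet> b\<bar>"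
    by (simp add: blinfun.diff_left inner_diff_left)
  also have "\<dots> \<le> norm (blinfun_apply (F2 w - F2 x) a) * norm b" by (rule Cauchy_Schwarz_ineq2)
  also have "\<dots> \<le> (norm (F2 w - F2 x) * norm a) * norm b"
    by (intro mult_right_mono norm_blinfun) auto
  also have "\<dots> \<le> (e * norm a) * norm b"
    by (intro mult_right_mono assms) auto
  finally show ?thesis by (simp add: mult.assoc)
qed

lemma H_sym: assumes x: "x \<in> U" shows "H x u \<bullet> v = H x v \<bullet> u"
proof (rule ccontr)
  assume ne: "H x u \<bullet> v \<noteq> H x v \<bullet> u"
  define d where "d = \<bar>H x v \<bullet> u - H x u \<bullet> v\<bar>"
  have dpos: "d > 0" using ne unfolding d_def by auto
  define e where "e = d / (4 * (norm u * norm v + 1))"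
  have epos: "e > 0" unfolding e_def using dpos by (simp add: add_nonneg_pos)
  obtain r where r: "r > 0" "ball x r \<subseteq> U" using x openU open_contains_ball by blast
  have "continuous (at x) F2" using has_derivative_continuous[OF d3[OF x]] .
  then obtain \<delta> where del: "\<delta> > 0" "\<And>w. dist w x < \<delta> \<Longrightarrow> dist (F2 w) (F2 x) < e"
    using epos unfolding continuous_at_eps_delta by blast
  define N where "N = norm u + norm v + 1"
  have Npos: "N > 0" unfolding N_def by (simp add: add_nonneg_pos)
  define h where "h = min r \<delta> / (2 * N)"
  have hpos: "h > 0" unfolding h_def using r del Npos by simp
  have small: "norm (a *\<^sub>R p + b *\<^sub>R q) < min r \<delta>"
    if "0 \<le> a" "a \<le> h" "0 \<le> b" "b \<le> h" "norm p + norm q < N" for a b p q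
  proof -
    have "norm (a *\<^sub>R p + b *\<^sub>R q) \<le> a * norm p + b * norm q"
      using norm_triangle_ineq[of "a *\<^sub>R p" "b *\<^sub>R q"] that by simp
    also have "\<dots> \<le> h * norm p + h * norm q"
      by (intro add_mono mult_right_mono) (use that in auto)
    also have "\<dots> = h * (norm p + norm q)" by (simp add: algebra_simps)
    also have "\<dots> \<le> h * N" using that hpos by simp
    also have "\<dots> < min r \<delta>" unfolding h_def using Npos r del by (simp add: field_simps min_def)
    finally show ?thesis .
  qed
  have inU: "x + a *\<^sub>R p + b *\<^sub>R q \<in> U" and close: "dist (x + a *\<^sub>R p + b *\<^sub>R q) x < \<delta>"
    if "0 \<le> a" "a \<le> h" "0 \<le> b" "b \<le> h" "norm p + norm q < N" for a b p q
  proof -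
    have "dist (x + a *\<^sub>R p + b *\<^sub>R q) x = norm (a *\<^sub>R p + b *\<^sub>R q)"
      by (simp add: dist_norm add.assoc)
    then have "dist (x + a *\<^sub>R p + b *\<^sub>R q) x < min r \<delta>" using small[OF that] by simp
    then show "x + a *\<^sub>R p + b *\<^sub>R q \<in> U" "dist (x + a *\<^sub>R p + b *\<^sub>R q) x < \<delta>"
      using r by (auto simp: dist_commute)
  qed
  have N1: "norm u + norm v < N" "norm v + norm u < N" unfolding N_def by auto
  obtain \<xi> \<eta> where A: "0 < \<xi>" "\<xi> < h" "0 < \<eta>" "\<eta> < h"
    "F (x + h *\<^sub>R u + h *\<^sub>R v) - F (x + h *\<^sub>R u) - F (x + h *\<^sub>R v) + F x = h\<^sup>2 * (H (x + \<xi> *\<^sub>R u + \<eta> *\<^sub>R v) v \<bullet> u)"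
    using mixed[OF hpos inU[OF _ _ _ _ N1(1)]] by blast
  obtain \<xi>' \<eta>' where B: "0 < \<xi>'" "\<xi>' < h" "0 < \<eta>'" "\<eta>' < h"
    "F (x + h *\<^sub>R v + h *\<^sub>R u) - F (x + h *\<^sub>R v) - F (x + h *\<^sub>R u) + F x = h\<^sup>2 * (H (x + \<xi>' *\<^sub>R v + \<eta>' *\<^sub>R u) u \<bullet> v)"
    using mixed[OF hpos inU[OF _ _ _ _ N1(2)]] by blast
  have "x + h *\<^sub>R v + h *\<^sub>R u = x + h *\<^sub>R u + h *\<^sub>R v" by (simp add: algebra_simps)
  then have eqH: "H (x + \<xi> *\<^sub>R u + \<eta> *\<^sub>R v) v \<bullet> u = H (x + \<xi>' *\<^sub>R v + \<eta>' *\<^sub>R u) u \<bullet> v"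
    using A(5) B(5) hpos by (simp add: algebra_simps)
  have c1: "norm (F2 (x + \<xi> *\<^sub>R u + \<eta> *\<^sub>R v) - F2 x) \<le> e"
    using del(2)[OF close[OF _ _ _ _ N1(1), of \<xi> \<eta>]] A by (simp add: dist_norm)
  have c2: "norm (F2 (x + \<xi>' *\<^sub>R v + \<eta>' *\<^sub>R u) - F2 x) \<le> e"
    using del(2)[OF close[OF _ _ _ _ N1(2), of \<xi>' \<eta>']] B by (simp add: dist_norm)
  have "d \<le> \<bar>H x v \<bullet> u - H (x + \<xi> *\<^sub>R u + \<eta> *\<^sub>R v) v \<bullet> u\<bar> + \<bar>H (x + \<xi>' *\<^sub>R v + \<eta>' *\<^sub>R u) u \<bullet> v - H x u \<bullet> v\<bar>"
    unfolding d_def using eqH by linarith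
  also have "\<dots> \<le> e * (norm v * norm u) + e * (norm u * norm v)"
    using H_close[OF c1, of v u] H_close[OF c2, of u v] by (intro add_mono) linarith+
  also have "\<dots> = 2 * e * (norm u * norm v)" by (simp add: algebra_simps)
  also have "\<dots> < d"
  proof -
    have "2 * e * (norm u * norm v) \<le> 2 * e * (norm u * norm v + 1)" using epos by simp
    also have "\<dots> = d / 2"
    proof -
      have "norm u * norm v + 1 > 0" by (simp add: add_nonneg_pos)
      then show ?thesis unfolding e_def by (simp add: field_simps)
    qed
    finally show ?thesis using dpos by simp
  qed
  finally show False by simp
qed

end



lemma pow32: "0 \<le> (x::real) \<Longrightarrow> x powr (3/2) = x * sqrt x"
proof -
  assume x: "0 \<le> x"
  show ?thesis
  proof (cases "x = 0")
    case False
    then have "x powr (3/2) = x powr (1 + 1/2)" by simp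
    also have "\<dots> = x powr 1 * x powr (1/2)" by (rule powr_add)
    also have "\<dots> = x * sqrt x" using x False by (simp add: powr_half_sqrt)
    finally show ?thesis .
  qed simp
qed

lemma sc_lipschitz:
  fixes \<phi> \<phi>' :: "real \<Rightarrow> real" and I :: "real set"
  assumes I: "convex I" and a: "a \<in> I" and b: "b \<in> I" and e: "\<epsilon> > 0"
    and D: "\<And>t. t \<in> I \<Longrightarrow> (\<phi> has_real_derivative \<phi>' t) (at t)"
    and nn: "\<And>t. t \<in> I \<Longrightarrow> \<phi> t \<ge> 0"
    and sc: "\<And>t. t \<in> I \<Longrightarrow> \<bar>\<phi>' t\<bar> \<le> 2 * \<phi> t powr (3/2)"
  shows "\<bar>1 / sqrt (\<phi> b + \<epsilon>) - 1 / sqrt (\<phi> a + \<epsilon>)\<bar> \<le> \<bar>b - a\<bar>"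
proof -
  define \<psi> where "\<psi> t = 1 / sqrt (\<phi> t + \<epsilon>)" for t
  define \<psi>' where "\<psi>' t = - \<phi>' t / (2 * (\<phi> t + \<epsilon>) * sqrt (\<phi> t + \<epsilon>))" for t
  have pos: "\<phi> t + \<epsilon> > 0" if "t \<in> I" for t using nn[OF that] e by simp
  have Dpsi: "(\<psi> has_real_derivative \<psi>' t) (at t)" if "t \<in> I" for t
  proof -
    have p: "\<phi> t + \<epsilon> > 0" using pos[OF that] .
    have g: "((\<lambda>t. \<phi> t + \<epsilon>) has_real_derivative \<phi>' t) (at t)"
      using DERIV_add[OF D[OF that] DERIV_const[of \<epsilon>]] by simp
    have s: "((\<lambda>t. sqrt (\<phi> t + \<epsilon>)) has_real_derivative (inverse (sqrt (\<phi> t + \<epsilon>)) / 2 * \<phi>' t)) (at t)"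
      using DERIV_chain2[OF DERIV_real_sqrt[OF p] g] .
    have "((\<lambda>t. inverse (sqrt (\<phi> t + \<epsilon>))) has_real_derivative
        (- ((inverse (sqrt (\<phi> t + \<epsilon>)) / 2 * \<phi>' t) * inverse ((sqrt (\<phi> t + \<epsilon>))^Suc (Suc 0))))) (at t)"
      by (rule DERIV_inverse_fun[OF s]) (use p in simp)
    moreover have "- ((inverse (sqrt (\<phi> t + \<epsilon>)) / 2 * \<phi>' t) * inverse ((sqrt (\<phi> t + \<epsilon>))^Suc (Suc 0))) = \<psi>' t"
      using p unfolding \<psi>'_def by (simp add: field_simps)
    ultimately show ?thesis unfolding \<psi>_def by (simp add: inverse_eq_divide)
  qed
  have bnd: "\<bar>\<psi>' t\<bar> \<le> 1" if "t \<in> I" for t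
  proof -
    have p: "\<phi> t + \<epsilon> > 0" using pos[OF that] .
    have "\<bar>\<phi>' t\<bar> \<le> 2 * (\<phi> t * sqrt (\<phi> t))" using sc[OF that] pow32[OF nn[OF that]] by simp
    also have "\<dots> \<le> 2 * ((\<phi> t + \<epsilon>) * sqrt (\<phi> t + \<epsilon>))"
      using nn[OF that] e by (intro mult_left_mono mult_mono) auto
    finally have "\<bar>\<phi>' t\<bar> \<le> 2 * (\<phi> t + \<epsilon>) * sqrt (\<phi> t + \<epsilon>)" by (simp only: mult.assoc)
    then show ?thesis unfolding \<psi>'_def using p by (simp add: abs_div divide_le_eq_1)
  qed
  have main: "\<bar>\<psi> q - \<psi> p\<bar> \<le> q - p" if "p \<in> I" "q \<in> I" "p < q" for p q
  proof -
    have sub: "t \<in> I" if "p \<le> t" "t \<le> q" for t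
    proof -
      have "t \<in> closed_segment p q" using that by (simp add: closed_segment_eq_real_ivl)
      then show ?thesis using I \<open>p \<in> I\<close> \<open>q \<in> I\<close> by (meson convex_contains_segment subsetD)
    qed
    from MVT2[OF \<open>p < q\<close> Dpsi[OF sub]] obtain z where z: "p < z" "z < q" "\<psi> q - \<psi> p = (q - p) * \<psi>' z" by blast
    have "\<bar>\<psi> q - \<psi> p\<bar> = (q - p) * \<bar>\<psi>' z\<bar>" using z by (simp add: abs_mult)
    also have "\<dots> \<le> (q - p) * 1" using bnd[OF sub] z by (intro mult_left_mono) auto
    finally show ?thesis by simp
  qed
  consider "a < b" | "a = b" | "b < a" by linarith
  then show ?thesis
  proof cases
    case 1 then show ?thesis using main[OF a b] unfolding \<psi>_def by simp
  next
    case 3 then show ?thesis using main[OF b a] unfolding \<psi>_def by (simp add: abs_minus_commute)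
  qed simp
qed

context nbar begin

lemma phi_deriv:
  assumes "x + t *\<^sub>R u \<in> U"
  shows "((\<lambda>t. H (x + t *\<^sub>R u) v \<bullet> w) has_real_derivative
           (blinfun_apply (blinfun_apply (F3 (x + t *\<^sub>R u)) u) v \<bullet> w)) (at t)"
proof -
  have "((\<lambda>z. H z v \<bullet> w) has_derivative (\<lambda>d. blinfun_apply (blinfun_apply (F3 (x + t *\<^sub>R u)) d) v \<bullet> w)) (at (x + t *\<^sub>R u))"
    using d3[OF assms] by (auto intro!: derivative_eq_intros)
  from line_real_deriv[OF this] show ?thesis .
qed

lemma rho_deriv:
  assumes "x + t *\<^sub>R u \<in> U"
  shows "((\<lambda>t. F1 (x + t *\<^sub>R u) \<bullet> w) has_real_derivative (H (x + t *\<^sub>R u) u \<bullet> w)) (at t)"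
  by (rule line_real_deriv[of "\<lambda>z. F1 z \<bullet> w" "\<lambda>d. H (x + t *\<^sub>R u) d \<bullet> w", simplified])
     (rule has_derivative_inner_left[OF d2[OF assms]])

lemma F_deriv:
  assumes "x + t *\<^sub>R u \<in> U"
  shows "((\<lambda>t. F (x + t *\<^sub>R u)) has_real_derivative (F1 (x + t *\<^sub>R u) \<bullet> u)) (at t)"
  by (rule line_real_deriv[of F "\<lambda>d. F1 (x + t *\<^sub>R u) \<bullet> d", simplified]) (rule d1[OF assms])

lemma line_set_convex: "convex {t::real. x + t *\<^sub>R u \<in> U}"
  unfolding convex_def
proof (intro allI impI ballI, clarsimp)
  fix s t a b :: real assume st: "x + s *\<^sub>R u \<in> U" "x + t *\<^sub>R u \<in> U" "0 \<le> a" "0 \<le> b" "a + b = 1"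
  have "a *\<^sub>R (x + s *\<^sub>R u) + b *\<^sub>R (x + t *\<^sub>R u) \<in> U"
    using convexU st unfolding convex_def by blast
  moreover have "a *\<^sub>R (x + s *\<^sub>R u) + b *\<^sub>R (x + t *\<^sub>R u) = x + (a * s + b * t) *\<^sub>R u"
    using st(5) by (simp add: algebra_simps flip: scaleR_add_left)
  ultimately show "x + (a * s + b * t) *\<^sub>R u \<in> U" by simp
qed

lemma sc_line:
  assumes "x + a *\<^sub>R u \<in> U" "x + b *\<^sub>R u \<in> U" "\<epsilon> > 0"
  shows "\<bar>1 / sqrt (H (x + b *\<^sub>R u) u \<bullet> u + \<epsilon>) - 1 / sqrt (H (x + a *\<^sub>R u) u \<bullet> u + \<epsilon>)\<bar> \<le> \<bar>b - a\<bar>"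
  by (rule sc_lipschitz[where I="{t. x + t *\<^sub>R u \<in> U}" and \<phi>="\<lambda>t. H (x + t *\<^sub>R u) u \<bullet> u"
      and \<phi>'="\<lambda>t. blinfun_apply (blinfun_apply (F3 (x + t *\<^sub>R u)) u) u \<bullet> u"])
     (use assms phi_deriv H_psd sc line_set_convex in auto)

lemma frontier_iff: "p \<in> frontier K \<longleftrightarrow> p \<in> K \<and> p \<notin> U"
  using closedK by (simp add: frontier_def closure_closed)

lemma zero_line_phi:
  assumes x: "x \<in> U" and h0: "H x u \<bullet> u = 0" and t: "x + t *\<^sub>R u \<in> U"
  shows "H (x + t *\<^sub>R u) u \<bullet> u = 0"
proof (rule ccontr)
  let ?p = "H (x + t *\<^sub>R u) u \<bullet> u"
  assume "?p \<noteq> 0"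
  then have pp: "?p > 0" using H_psd[OF t, of u] by simp
  define q where "q = \<bar>t\<bar> + 1 / sqrt ?p + 1"
  have qpos: "q > 0" unfolding q_def using pp by (simp add: add_nonneg_pos)
  define \<epsilon> where "\<epsilon> = 1 / q\<^sup>2"
  have epos: "\<epsilon> > 0" unfolding \<epsilon>_def using qpos by simp
  have se: "1 / sqrt \<epsilon> = q" unfolding \<epsilon>_def using qpos by (simp add: real_sqrt_divide)
  have x0: "x + 0 *\<^sub>R u \<in> U" using x by simp
  from sc_line[OF x0 t epos] h0
  have "\<bar>1 / sqrt (?p + \<epsilon>) - 1 / sqrt \<epsilon>\<bar> \<le> \<bar>t\<bar>" by simp
  then have "1 / sqrt (?p + \<epsilon>) \<ge> q - \<bar>t\<bar>" using se by linarith
  then have A: "1 / sqrt (?p + \<epsilon>) \<ge> 1 / sqrt ?p + 1" unfolding q_def by simp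
  have "1 / sqrt (?p + \<epsilon>) \<le> 1 / sqrt ?p"
    using pp epos by (intro divide_left_mono real_sqrt_le_mono) auto
  with A show False by simp
qed

lemma zero_line_F:
  assumes x: "x \<in> U" and h0: "H x u \<bullet> u = 0" and t: "x + t *\<^sub>R u \<in> U"
  shows "F (x + t *\<^sub>R u) = F x"
proof -
  have g0: "F1 (x + s *\<^sub>R u) \<bullet> u = 0" if "x + s *\<^sub>R u \<in> U" for s
  proof -
    have "(F1 (x + s *\<^sub>R u) \<bullet> u)\<^sup>2 \<le> 0"
      using nuc[OF that, of u] zero_line_phi[OF x h0 that] by simp
    then show ?thesis by simp
  qed
  have sub: "x + s *\<^sub>R u \<in> U" if "min 0 t \<le> s" "s \<le> max 0 t" for s
  proof -
    have "s \<in> closed_segment 0 t" using that by (auto simp: closed_segment_eq_real_ivl)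
    moreover have "0 \<in> {s. x + s *\<^sub>R u \<in> U}" "t \<in> {s. x + s *\<^sub>R u \<in> U}" using x t by auto
    moreover have "\<forall>a\<in>{s. x + s *\<^sub>R u \<in> U}. \<forall>b\<in>{s. x + s *\<^sub>R u \<in> U}. closed_segment a b \<subseteq> {s. x + s *\<^sub>R u \<in> U}"
      using line_set_convex[of x u] by (simp only: convex_contains_segment)
    ultimately have "s \<in> {s. x + s *\<^sub>R u \<in> U}" by blast
    then show ?thesis by simp
  qed
  consider "t = 0" | "0 < t" | "t < 0" by linarith
  then show ?thesis
  proof cases
    case 2
    have "\<exists>z>0. z < t \<and> F (x + t *\<^sub>R u) - F (x + 0 *\<^sub>R u) = (t - 0) * (F1 (x + z *\<^sub>R u) \<bullet> u)"
      by (rule MVT2[OF 2]) (rule F_deriv, rule sub, use 2 in auto)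
    then obtain z where z: "0 < z" "z < t" "F (x + t *\<^sub>R u) - F (x + 0 *\<^sub>R u) = (t - 0) * (F1 (x + z *\<^sub>R u) \<bullet> u)" by blast
    have "F1 (x + z *\<^sub>R u) \<bullet> u = 0" by (rule g0, rule sub) (use z in auto)
    then show ?thesis using z by simp
  next
    case 3
    have "\<exists>z>t. z < 0 \<and> F (x + 0 *\<^sub>R u) - F (x + t *\<^sub>R u) = (0 - t) * (F1 (x + z *\<^sub>R u) \<bullet> u)"
      by (rule MVT2[OF 3]) (rule F_deriv, rule sub, use 3 in auto)
    then obtain z where z: "t < z" "z < 0" "F (x + 0 *\<^sub>R u) - F (x + t *\<^sub>R u) = (0 - t) * (F1 (x + z *\<^sub>R u) \<bullet> u)" by blast
    have "F1 (x + z *\<^sub>R u) \<bullet> u = 0" by (rule g0, rule sub) (use z in auto)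
    then show ?thesis using z by simp
  qed simp
qed

lemma zero_ray:
  assumes x: "x \<in> U" and h0: "H x u \<bullet> u = 0" and unz: "u \<noteq> 0" and that: "t \<ge> 0"
  shows "x + t *\<^sub>R u \<in> U"
proof (rule ccontr)
  assume nt: "x + t *\<^sub>R u \<notin> U"
  define S where "S = {s. s \<ge> 0 \<and> x + s *\<^sub>R u \<notin> U}"
  have Sne: "S \<noteq> {}" using nt that unfolding S_def by auto
  have Sbdd: "bdd_below S" unfolding S_def by (rule bdd_belowI[of _ 0]) auto
  have Scl: "closed S"
  proof -
    have "S = {0..} \<inter> (\<lambda>s. x + s *\<^sub>R u) -` (- U)" unfolding S_def by auto
    moreover have "closed ((\<lambda>s::real. x + s *\<^sub>R u) -` (- U))"
      by (rule closed_vimage) (auto intro!: continuous_intros)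
    ultimately show ?thesis by (simp add: closed_Int)
  qed
  define T where "T = Inf S"
  have TS: "T \<in> S" unfolding T_def by (rule closed_contains_Inf[OF Sne Sbdd Scl])
  have below: "x + s *\<^sub>R u \<in> U" if "0 \<le> s" "s < T" for s
  proof (rule ccontr)
    assume "x + s *\<^sub>R u \<notin> U"
    then have "s \<in> S" using that unfolding S_def by auto
    then have "T \<le> s" unfolding T_def by (rule cInf_lower[OF _ Sbdd])
    with that show False by simp
  qed
  have Tpos: "T > 0"
  proof -
    have "T \<ge> 0" "x + T *\<^sub>R u \<notin> U" using TS unfolding S_def by auto
    moreover have "T \<noteq> 0" using x \<open>x + T *\<^sub>R u \<notin> U\<close> by auto
    ultimately show ?thesis by simp
  qed
  let ?p = "x + T *\<^sub>R u"
  have ev: "eventually (\<lambda>s. s \<in> {0<..<T}) (at_left T)" using eventually_at_left_real[OF Tpos] .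
  have lim: "((\<lambda>s. x + s *\<^sub>R u) \<longlongrightarrow> ?p) (at_left T)"
    by (intro tendsto_intros)
  have pK: "?p \<in> K"
  proof (rule Lim_in_closed_set[OF closedK _ _ lim])
    show "\<forall>\<^sub>F s in at_left T. x + s *\<^sub>R u \<in> K" using ev by eventually_elim (use below UK in auto)
  qed simp
  have pF: "?p \<in> frontier K" using pK TS unfolding frontier_iff S_def by auto
  show False
  proof (rule no_bounded_approach[OF pF, of "\<lambda>s. x + s *\<^sub>R u" "at_left T" "F x"])
    show "filterlim (\<lambda>s. x + s *\<^sub>R u) (at ?p within U) (at_left T)"
      unfolding filterlim_at
    proof
      show "\<forall>\<^sub>F s in at_left T. x + s *\<^sub>R u \<in> U \<and> x + s *\<^sub>R u \<noteq> ?p"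
        using ev by eventually_elim (use below unz in auto)
    qed (rule lim)
    show "at_left T \<noteq> bot" by simp
    show "\<forall>\<^sub>F s in at_left T. F (x + s *\<^sub>R u) \<le> F x"
      using ev by eventually_elim (use below zero_line_F[OF x h0] in auto)
  qed
qed

lemma ray_in_K:
  assumes x: "x \<in> U" and ray: "\<And>t. t \<ge> 0 \<Longrightarrow> x + t *\<^sub>R u \<in> U"
  shows "u \<in> K"
proof -
  have lim: "((\<lambda>t::real. inverse t *\<^sub>R x + u) \<longlongrightarrow> 0 *\<^sub>R x + u) at_top"
  proof -
    have "((\<lambda>t::real. inverse t) \<longlongrightarrow> 0) at_top" by (rule tendsto_inverse_0_at_top[OF filterlim_ident])
    then show ?thesis by (intro tendsto_add tendsto_scaleR tendsto_const)
  qed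
  have ev: "eventually (\<lambda>t::real. inverse t *\<^sub>R x + u \<in> K) at_top"
    using eventually_gt_at_top[of 0]
  proof eventually_elim
    case (elim t)
    have "inverse t *\<^sub>R (x + t *\<^sub>R u) \<in> K" using cone_scale[OF UK[OF ray[of t]]] elim by simp
    then show ?case using elim by (simp add: algebra_simps)
  qed
  show ?thesis using Lim_in_closed_set[OF closedK ev _ lim] by simp
qed

lemma H_nondeg:
  assumes x: "x \<in> U" and h0: "H x u \<bullet> u = 0" shows "u = 0"
proof (rule ccontr)
  assume unz: "u \<noteq> 0"
  have "u \<in> K" using ray_in_K[OF x zero_ray[OF x h0 unz]] .
  moreover have hm: "H x (- u) \<bullet> (- u) = 0" using h0 by (simp add: blinfun.minus_right)
  have "\<And>t. t \<ge> 0 \<Longrightarrow> x + t *\<^sub>R (- u) \<in> U" by (rule zero_ray[OF x hm]) (use unz in auto)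
  then have "- u \<in> K" by (rule ray_in_K[OF x])
  ultimately show False using pointed unz by blast
qed

end


lemma psd_cs:
  fixes P :: "'b::real_inner \<Rightarrow> 'b"
  assumes lin: "linear P" and sym: "\<And>u v. P u \<bullet> v = P v \<bullet> u" and psd: "\<And>u. P u \<bullet> u \<ge> 0"
  shows "(P w \<bullet> z)\<^sup>2 \<le> (P w \<bullet> w) * (P z \<bullet> z)"
proof -
  have exp: "P (w + t *\<^sub>R z) \<bullet> (w + t *\<^sub>R z) = P w \<bullet> w + 2 * t * (P w \<bullet> z) + t\<^sup>2 * (P z \<bullet> z)" for t
  proof -
    have "P (w + t *\<^sub>R z) = P w + t *\<^sub>R P z" using lin by (simp add: linear_add linear_cmul)
    then show ?thesis using sym[of z w]
      by (simp add: inner_add_left inner_add_right algebra_simps power2_eq_square)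
  qed
  have nn: "0 \<le> P w \<bullet> w + 2 * t * (P w \<bullet> z) + t\<^sup>2 * (P z \<bullet> z)" for t using psd[of "w + t *\<^sub>R z"] exp[of t] by simp
  show ?thesis
  proof (cases "P z \<bullet> z = 0")
    case True
    have "P w \<bullet> z = 0"
    proof (rule ccontr)
      assume ne: "P w \<bullet> z \<noteq> 0"
      have "0 \<le> P w \<bullet> w + 2 * (- (P w \<bullet> w + 1) / (2 * (P w \<bullet> z))) * (P w \<bullet> z)"
        using nn[of "- (P w \<bullet> w + 1) / (2 * (P w \<bullet> z))"] True by simp
      also have "\<dots> = -1" using ne by (simp add: field_simps)
      finally show False by simp
    qed
    then show ?thesis using True by simp
  next
    case False
    then have pz: "P z \<bullet> z > 0" using psd[of z] by simp
    have "0 \<le> P w \<bullet> w + 2 * (- (P w \<bullet> z) / (P z \<bullet> z)) * (P w \<bullet> z) + (- (P w \<bullet> z) / (P z \<bullet> z))\<^sup>2 * (P z \<bullet> z)"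
      by (rule nn)
    also have "\<dots> = P w \<bullet> w - (P w \<bullet> z)\<^sup>2 / (P z \<bullet> z)" using pz by (simp add: field_simps power2_eq_square)
    finally show ?thesis using pz by (simp add: field_simps)
  qed
qed

lemma psd_cs_abs:
  fixes P :: "'b::real_inner \<Rightarrow> 'b"
  assumes lin: "linear P" and sym: "\<And>u v. P u \<bullet> v = P v \<bullet> u" and psd: "\<And>u. P u \<bullet> u \<ge> 0"
  shows "\<bar>P w \<bullet> z\<bar> \<le> sqrt (P w \<bullet> w) * sqrt (P z \<bullet> z)"
proof -
  have "sqrt ((P w \<bullet> z)\<^sup>2) \<le> sqrt ((P w \<bullet> w) * (P z \<bullet> z))"
    by (rule real_sqrt_le_mono[OF psd_cs[OF assms]])
  then show ?thesis by (simp add: real_sqrt_mult)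
qed

context nbar begin

lemma ray_U: assumes "p \<in> U" "z \<in> K" "t \<ge> 0" shows "p + t *\<^sub>R z \<in> U"
  using U_add[OF assms(1) cone_scale[OF assms(2,3)]] .

lemma grad_nonpos: assumes p: "p \<in> U" and z: "z \<in> K" shows "F1 p \<bullet> z \<le> 0"
proof (rule ccontr)
  assume "\<not> F1 p \<bullet> z \<le> 0"
  then have apos: "F1 p \<bullet> z > 0" by simp
  define a where "a = F1 p \<bullet> z"
  define r where "r t = F1 (p + t *\<^sub>R z) \<bullet> z" for t
  define r' where "r' t = H (p + t *\<^sub>R z) z \<bullet> z" for t
  have dr: "(r has_real_derivative r' t) (at t)" if "t \<ge> 0" for t
    unfolding r_def r'_def by (rule rho_deriv[OF ray_U[OF p z that]])
  have r'nn: "r' t \<ge> 0" if "t \<ge> 0" for t unfolding r'_def by (rule H_psd[OF ray_U[OF p z that]])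
  have rge: "r t \<ge> a" if "t \<ge> 0" for t
  proof -
    have "r 0 \<le> r t"
      by (rule DERIV_nonneg_imp_nondecreasing[OF that]) (use dr r'nn in auto)
    then show ?thesis unfolding a_def r_def by simp
  qed
  have rpos: "r t > 0" if "t \<ge> 0" for t using rge[OF that] apos a_def by simp
  define w' where "w' t = - (r' t * inverse (r t ^ Suc (Suc 0)))" for t
  have dw: "((\<lambda>t. inverse (r t)) has_real_derivative w' t) (at t)" if "t \<ge> 0" for t
    unfolding w'_def by (rule DERIV_inverse_fun[OF dr[OF that]]) (use rpos[OF that] in simp)
  have w'le: "w' t \<le> - 1 / \<nu>" if "t \<ge> 0" for t
  proof -
    have "(r t)\<^sup>2 \<le> \<nu> * r' t" unfolding r_def r'_def by (rule nuc[OF ray_U[OF p z that]])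
    then have "1 / \<nu> \<le> r' t / (r t)\<^sup>2" using nu_pos rpos[OF that] by (simp add: field_simps)
    then show ?thesis unfolding w'_def by (simp add: power2_eq_square divide_inverse)
  qed
  define T where "T = \<nu> / a"
  have Tpos: "T > 0" unfolding T_def using nu_pos apos a_def by simp
  from MVT2[OF Tpos dw] obtain \<xi> where xi: "0 < \<xi>" "\<xi> < T"
    "inverse (r T) - inverse (r 0) = (T - 0) * w' \<xi>" by auto
  have "w' \<xi> \<le> - 1 / \<nu>" using w'le[of \<xi>] xi by simp
  then have "T * w' \<xi> \<le> T * (- 1 / \<nu>)" by (rule mult_left_mono) (use Tpos in simp)
  then have "(T - 0) * w' \<xi> \<le> T * (- 1 / \<nu>)" by simp
  also have "\<dots> = - inverse a" unfolding T_def using nu_pos apos a_def by (simp add: field_simps)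
  finally have c1: "(T - 0) * w' \<xi> \<le> - inverse a" .
  have "r 0 = a" unfolding r_def a_def by simp
  then have "inverse (r T) - inverse a \<le> - inverse a" using xi(3) c1 by simp
  then have "inverse (r T) \<le> 0" by linarith
  moreover have "inverse (r T) > 0" using rpos[of T] Tpos by simp
  ultimately show False by simp
qed

lemma grad_lower: assumes x: "x \<in> U" and z: "z \<in> K" shows "sqrt (H x z \<bullet> z) \<le> - (F1 x \<bullet> z)"
proof -
  define a where "a = - (F1 x \<bullet> z)"
  define \<phi>0 where "\<phi>0 = H x z \<bullet> z"
  have \<phi>0nn: "\<phi>0 \<ge> 0" unfolding \<phi>0_def by (rule H_psd[OF x])
  have key: "sqrt \<phi>0 \<le> a + 2 * sqrt \<epsilon>" if e: "\<epsilon> > 0" for \<epsilon>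
  proof -
    define c where "c = 1 / sqrt (\<phi>0 + \<epsilon>)"
    have cpos: "c > 0" unfolding c_def using \<phi>0nn e by simp
    define T where "T = 1 / sqrt \<epsilon>"
    have Tpos: "T > 0" unfolding T_def using e by simp
    define r where "r t = F1 (x + t *\<^sub>R z) \<bullet> z" for t
    define \<phi> where "\<phi> t = H (x + t *\<^sub>R z) z \<bullet> z" for t
    have phlow: "\<phi> t \<ge> inverse ((c + t) ^ Suc (Suc 0)) - \<epsilon>" if t: "t \<ge> 0" for t
    proof -
      have x0: "x + 0 *\<^sub>R z \<in> U" using x by simp
      from sc_line[OF x0 ray_U[OF x z t] e]
      have "1 / sqrt (\<phi> t + \<epsilon>) \<le> c + t" unfolding c_def \<phi>_def \<phi>0_def using t by simp
      moreover have pp: "\<phi> t + \<epsilon> > 0" unfolding \<phi>_def using H_psd[OF ray_U[OF x z t], of z] e by simp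
      ultimately have "1 \<le> (c + t) * sqrt (\<phi> t + \<epsilon>)" by (simp add: divide_le_eq mult.commute)
      then have "1 \<le> ((c + t) * sqrt (\<phi> t + \<epsilon>))\<^sup>2"
        by (metis one_le_power)
      also have "\<dots> = (c + t)\<^sup>2 * (\<phi> t + \<epsilon>)" using pp by (simp add: power_mult_distrib)
      finally have "inverse ((c + t)\<^sup>2) \<le> \<phi> t + \<epsilon>" using cpos t
        by (simp add: inverse_eq_divide divide_le_eq mult.commute)
      then show ?thesis by (simp add: power2_eq_square)
    qed
    define k where "k t = r t + inverse (c + t) + \<epsilon> * t" for t
    have dk: "(k has_real_derivative (\<phi> t + - (1 * inverse ((c + t) ^ Suc (Suc 0))) + \<epsilon>)) (at t)"
      if t: "t \<ge> 0" for t
    proof -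
      have d1: "(r has_real_derivative \<phi> t) (at t)"
        unfolding r_def \<phi>_def by (rule rho_deriv[OF ray_U[OF x z t]])
      have d2: "((\<lambda>t. inverse (c + t)) has_real_derivative - (1 * inverse ((c + t) ^ Suc (Suc 0)))) (at t)"
      proof -
        have "((\<lambda>t. c + t) has_real_derivative 1) (at t)" by (auto intro!: derivative_eq_intros)
        from DERIV_inverse_fun[OF this] cpos t show ?thesis by simp
      qed
      have d3: "((\<lambda>t. \<epsilon> * t) has_real_derivative \<epsilon>) (at t)" by (rule DERIV_cmult_Id)
      show ?thesis unfolding k_def by (rule DERIV_add[OF DERIV_add[OF d1 d2] d3])
    qed
    have "k 0 \<le> k T"
    proof (rule DERIV_nonneg_imp_nondecreasing[of 0 T k])
      show "0 \<le> T" using Tpos by simp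
      fix t assume "0 \<le> t" "t \<le> T"
      then show "\<exists>y. (k has_real_derivative y) (at t) \<and> 0 \<le> y"
        using dk phlow by fastforce
    qed
    moreover have "k 0 = - a + sqrt (\<phi>0 + \<epsilon>)"
      unfolding k_def r_def a_def c_def by simp
    moreover have "k T \<le> 2 * sqrt \<epsilon>"
    proof -
      have "r T \<le> 0" unfolding r_def by (rule grad_nonpos[OF ray_U[OF x z] z]) (use Tpos in simp)
      moreover have "inverse (c + T) \<le> inverse T" using cpos Tpos by (simp add: le_imp_inverse_le)
      moreover have "inverse T = sqrt \<epsilon>" "\<epsilon> * T = sqrt \<epsilon>" unfolding T_def using e
        by (simp_all add: real_div_sqrt)
      ultimately show ?thesis unfolding k_def by simp
    qed
    moreover have "sqrt \<phi>0 \<le> sqrt (\<phi>0 + \<epsilon>)" using e by simp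
    ultimately show ?thesis by linarith
  qed
  show ?thesis
  proof (rule ccontr)
    assume "\<not> ?thesis"
    then have gt: "sqrt \<phi>0 > a" unfolding \<phi>0_def a_def by simp
    define \<epsilon> where "\<epsilon> = ((sqrt \<phi>0 - a) / 3)\<^sup>2"
    have e: "\<epsilon> > 0" unfolding \<epsilon>_def using gt by simp
    have "sqrt \<epsilon> = (sqrt \<phi>0 - a) / 3" unfolding \<epsilon>_def using gt by simp
    with key[OF e] gt show False by (simp add: field_simps)
  qed
qed

lemma H_linear: "linear (H x)" by (simp add: blinfun.bounded_linear_right bounded_linear.linear)

lemma H_cs: assumes x: "x \<in> U" shows "\<bar>H x w \<bullet> z\<bar> \<le> sqrt (H x w \<bullet> w) * sqrt (H x z \<bullet> z)"
  by (rule psd_cs_abs[OF H_linear H_sym[OF x] H_psd[OF x]])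

lemma H_inj: assumes x: "x \<in> U" shows "inj (H x)"
proof (rule linear_injective_0[OF H_linear, THEN iffD2], intro allI impI)
  fix u assume "H x u = 0"
  then have "H x u \<bullet> u = 0" by simp
  then show "u = 0" by (rule H_nondeg[OF x])
qed

lemma H_bij: assumes x: "x \<in> U" shows "bij (H x)"
  using H_inj[OF x] linear_injective_imp_surjective[OF H_linear] by (simp add: bij_def)

lemma H_coercive: assumes x: "x \<in> U" shows "\<exists>m>0. \<forall>u. m * (norm u)\<^sup>2 \<le> H x u \<bullet> u"
proof -
  have cont: "continuous_on (sphere 0 1) (\<lambda>u. H x u \<bullet> u)" by (intro continuous_intros)
  obtain b :: 'a where b: "b \<in> Basis" using nonempty_Basis by blast
  have ne: "sphere (0::'a) 1 \<noteq> {}" using b by (auto simp: sphere_def intro!: exI[of _ b])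
  obtain u0 where u0: "u0 \<in> sphere 0 1" "\<And>y. y \<in> sphere 0 1 \<Longrightarrow> H x u0 \<bullet> u0 \<le> H x y \<bullet> y"
    using continuous_attains_inf[OF compact_sphere ne cont] by blast
  define m where "m = H x u0 \<bullet> u0"
  have "u0 \<noteq> 0" using u0(1) by auto
  then have mpos: "m > 0" unfolding m_def using H_psd[OF x, of u0] H_nondeg[OF x, of u0] by fastforce
  have "m * (norm u)\<^sup>2 \<le> H x u \<bullet> u" for u
  proof (cases "u = 0")
    case False
    let ?v = "(1 / norm u) *\<^sub>R u"
    have "?v \<in> sphere 0 1" using False by simp
    then have "m \<le> H x ?v \<bullet> ?v" unfolding m_def by (rule u0(2))
    also have "\<dots> = (H x u \<bullet> u) / (norm u)\<^sup>2"
      by (simp add: blinfun.scaleR_right inner_scaleR_left inner_scaleR_right power2_eq_square)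
    finally show ?thesis using False by (simp add: field_simps)
  qed simp
  then show ?thesis using mpos by blast
qed

lemma neg_grad_int: assumes x: "x \<in> U" shows "- F1 x \<in> interior (dual_cone K)"
proof -
  obtain m where m: "m > 0" "\<And>u. m * (norm u)\<^sup>2 \<le> H x u \<bullet> u" using H_coercive[OF x] by blast
  have "ball (- F1 x) (sqrt m) \<subseteq> dual_cone K"
  proof
    fix s' assume s': "s' \<in> ball (- F1 x) (sqrt m)"
    show "s' \<in> dual_cone K" unfolding dual_cone_def
    proof (intro CollectI ballI)
      fix z assume z: "z \<in> K"
      have "sqrt m * norm z = sqrt (m * (norm z)\<^sup>2)" by (simp add: real_sqrt_mult)
      also have "\<dots> \<le> sqrt (H x z \<bullet> z)" using m(2) by simp
      also have "\<dots> \<le> - (F1 x \<bullet> z)" by (rule grad_lower[OF x z])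
      finally have A: "sqrt m * norm z \<le> - (F1 x \<bullet> z)" .
      have "\<bar>(s' + F1 x) \<bullet> z\<bar> \<le> norm (s' + F1 x) * norm z" by (rule Cauchy_Schwarz_ineq2)
      also have "\<dots> \<le> sqrt m * norm z"
        using s' by (intro mult_right_mono) (auto simp: dist_norm norm_minus_commute algebra_simps)
      finally have B: "\<bar>(s' + F1 x) \<bullet> z\<bar> \<le> sqrt m * norm z" .
      have "s' \<bullet> z = - (F1 x \<bullet> z) + (s' + F1 x) \<bullet> z" by (simp add: inner_add_left)
      then show "0 \<le> s' \<bullet> z" using A B by linarith
    qed
  qed
  then show ?thesis using m(1) mem_interior by (metis real_sqrt_gt_0_iff)
qed

lemma seg_U: assumes "x \<in> U" "y \<in> U" "0 \<le> t" "t \<le> 1" shows "x + t *\<^sub>R (y - x) \<in> U"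
proof -
  have "(1 - t) *\<^sub>R x + t *\<^sub>R y \<in> U" using convexU assms unfolding convex_def by auto
  moreover have "(1 - t) *\<^sub>R x + t *\<^sub>R y = x + t *\<^sub>R (y - x)" by (simp add: algebra_simps)
  ultimately show ?thesis by simp
qed

lemma F1_inj: assumes x: "x \<in> U" and y: "y \<in> U" and eq: "F1 x = F1 y" shows "x = y"
proof (rule ccontr)
  assume ne: "x \<noteq> y"
  define d where "d = y - x"
  have dnz: "d \<noteq> 0" using ne unfolding d_def by simp
  have D: "((\<lambda>t. F1 (x + t *\<^sub>R d) \<bullet> d) has_real_derivative H (x + t *\<^sub>R d) d \<bullet> d) (at t)"
    if "0 \<le> t" "t \<le> 1" for t
    by (rule rho_deriv) (use seg_U[OF x y that] d_def in simp)
  obtain \<xi> where xi: "0 < \<xi>" "\<xi> < 1"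
    "F1 (x + 1 *\<^sub>R d) \<bullet> d - F1 (x + 0 *\<^sub>R d) \<bullet> d = (1 - 0) * (H (x + \<xi> *\<^sub>R d) d \<bullet> d)"
    using MVT2[OF zero_less_one D] by blast
  have xy: "x + 1 *\<^sub>R d = y" unfolding d_def by simp
  have "H (x + \<xi> *\<^sub>R d) d \<bullet> d = 0" using xi(3) eq xy by simp
  moreover have mem: "x + \<xi> *\<^sub>R d \<in> U" using seg_U[OF x y, of \<xi>] xi unfolding d_def by simp
  ultimately have "d = 0" using H_nondeg by blast
  with dnz show False by simp
qed

lemma tangent: assumes x: "x \<in> U" and y: "y \<in> U" shows "F y \<ge> F x + F1 x \<bullet> (y - x)"
proof -
  define d where "d = y - x"
  define A where "A = {t::real. x + t *\<^sub>R (y - x) \<in> U}"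
  define \<zeta> where "\<zeta> t = F (x + t *\<^sub>R (y - x))" for t
  have Aconv: "convex A" unfolding A_def by (rule line_set_convex)
  have Aopen: "open A" unfolding A_def
    by (rule open_vimage[of U "\<lambda>t. x + t *\<^sub>R (y - x)", unfolded vimage_def]) (auto intro!: continuous_intros)
  have 0: "0 \<in> interior A" using Aopen x unfolding A_def by (simp add: interior_open)
  have 1: "1 \<in> A" using y unfolding A_def by simp
  have cv: "convex_on A \<zeta>"
  proof (rule convex_onI[OF _ Aconv])
    fix s t and a :: real assume "0 < a" "a < 1" "s \<in> A" "t \<in> A"
    then have st: "s \<in> A" "t \<in> A" "0 \<le> a" "a \<le> 1" by auto
    have e0: "x + ((1 - a) * s + a * t) *\<^sub>R d = (1 - a) *\<^sub>R (x + s *\<^sub>R d) + a *\<^sub>R (x + t *\<^sub>R d)"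
      by (simp add: algebra_simps)
    have e: "x + ((1 - a) * s + a * t) *\<^sub>R (y - x) = (1 - a) *\<^sub>R (x + s *\<^sub>R (y - x)) + a *\<^sub>R (x + t *\<^sub>R (y - x))"
      using e0 unfolding d_def .
    show "\<zeta> ((1 - a) *\<^sub>R s + a *\<^sub>R t) \<le> (1 - a) * \<zeta> s + a * \<zeta> t"
      unfolding \<zeta>_def using convex_onD[OF conv, of a "x + s *\<^sub>R (y - x)" "x + t *\<^sub>R (y - x)"] st e
      unfolding A_def by simp
  qed
  have der: "(\<zeta> has_real_derivative F1 x \<bullet> (y - x)) (at 0 within A)"
    unfolding \<zeta>_def using F_deriv[of x 0 "y - x"] x by (simp add: has_field_derivative_at_within)
  have "\<zeta> 1 - \<zeta> 0 \<ge> F1 x \<bullet> (y - x) * (1 - 0)"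
    by (rule convex_on_imp_above_tangent[OF cv convex_connected[OF Aconv] 0 1 der])
  then show ?thesis unfolding \<zeta>_def by simp
qed

end


context nbar begin

lemma F_isCont: "x \<in> U \<Longrightarrow> isCont F x"
  using has_derivative_continuous[OF d1] by blast

lemma exists_x: assumes s: "s \<in> interior (dual_cone K)" shows "\<exists>x\<in>U. F1 x = - s"
proof -
  obtain \<delta> where del: "\<delta> > 0" "ball s \<delta> \<subseteq> dual_cone K" using s mem_interior by blast
  obtain x00 where x00: "x00 \<in> U" using intK by blast
  define t where "t = 2 * norm (F1 x00) / \<delta> + 1"
  have tpos: "t > 0" unfolding t_def using del by (simp add: add_nonneg_pos)
  define x0 where "x0 = t *\<^sub>R x00"
  have x0: "x0 \<in> U" unfolding x0_def by (rule U_scale[OF x00 tpos])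
  define g0 where "g0 = F1 x0"
  have "t *\<^sub>R g0 = F1 x00" unfolding g0_def x0_def by (rule F1_scale[OF x00 tpos])
  then have g0eq: "g0 = (1 / t) *\<^sub>R F1 x00"
  proof -
    assume a: "t *\<^sub>R g0 = F1 x00"
    have "(1 / t) *\<^sub>R (t *\<^sub>R g0) = g0" using tpos by simp
    then show ?thesis using a by simp
  qed
  have g0small: "norm g0 < \<delta> / 2"
  proof -
    have "norm g0 = norm (F1 x00) / t" using g0eq tpos by simp
    also have "\<dots> < \<delta> / 2"
    proof -
      have "norm (F1 x00) * 2 < \<delta> * t" unfolding t_def using del by (simp add: field_simps)
      then show ?thesis using tpos del by (simp add: field_simps)
    qed
    finally show ?thesis .
  qed
  have coer: "(s + g0) \<bullet> x \<ge> (\<delta> / 2) * norm x" if x: "x \<in> K" for x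
  proof (cases "x = 0")
    case False
    define v where "v = s + g0 - (\<delta> / (2 * norm x)) *\<^sub>R x"
    have "dist s v = norm (g0 - (\<delta> / (2 * norm x)) *\<^sub>R x)" unfolding v_def dist_norm by (simp add: algebra_simps norm_minus_commute)
    also have "\<dots> \<le> norm g0 + norm ((\<delta> / (2 * norm x)) *\<^sub>R x)" by (rule norm_triangle_ineq4)
    also have "norm ((\<delta> / (2 * norm x)) *\<^sub>R x) = \<delta> / 2" using False del by simp
    finally have "dist s v < \<delta>" using g0small by simp
    then have "v \<in> dual_cone K" using del by auto
    then have "0 \<le> v \<bullet> x" using x unfolding dual_cone_def by auto
    also have "v \<bullet> x = (s + g0) \<bullet> x - (\<delta> / 2) * norm x"
      unfolding v_def using False by (simp add: inner_diff_left power2_norm_eq_inner[symmetric] power2_eq_square)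
    finally show ?thesis by simp
  qed simp
  define \<Phi> where "\<Phi> x = s \<bullet> x + F x" for x
  define C0 where "C0 = F x0 - g0 \<bullet> x0"
  have lower: "\<Phi> x \<ge> (\<delta> / 2) * norm x + C0" if x: "x \<in> U" for x
  proof -
    have "F x \<ge> F x0 + g0 \<bullet> (x - x0)" unfolding g0_def by (rule tangent[OF x0 x])
    then show ?thesis using coer[OF UK[OF x]] unfolding \<Phi>_def C0_def by (simp add: inner_add_left inner_diff_right)
  qed
  define L where "L = {x \<in> U. \<Phi> x \<le> \<Phi> x0}"
  define R0 where "R0 = 2 * (\<Phi> x0 - C0) / \<delta>"
  have Lnorm: "norm x \<le> R0" if "x \<in> L" for x
  proof -
    have "(\<delta> / 2) * norm x \<le> \<Phi> x0 - C0" using lower[of x] that unfolding L_def by auto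
    then show ?thesis unfolding R0_def using del by (simp add: field_simps)
  qed
  have Lbdd: "bounded L" unfolding bounded_iff using Lnorm by blast
  have LU: "L \<subseteq> U" unfolding L_def by auto
  have Fbd: "F x \<le> \<Phi> x0 + norm s * R0" if "x \<in> L" for x
  proof -
    have "- (s \<bullet> x) \<le> norm s * norm x" using Cauchy_Schwarz_ineq2[of s x] by linarith
    also have "\<dots> \<le> norm s * R0" using Lnorm[OF that] by (simp add: mult_left_mono)
    finally show ?thesis using that unfolding L_def \<Phi>_def by simp
  qed
  have PhiCont: "isCont \<Phi> x" if "x \<in> U" for x unfolding \<Phi>_def
    by (intro continuous_intros F_isCont that)
  have Lclosed: "closed L" unfolding closed_limpt
  proof (intro allI impI)
    fix q assume q: "q islimpt L"
    have "q islimpt K" using islimpt_subset[OF q] LU UK by blast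
    then have qK: "q \<in> K" using closedK closed_limpt by blast
    have nb: "at q within L \<noteq> bot" using q trivial_limit_within by blast
    have qU: "q \<in> U"
    proof (rule ccontr)
      assume "q \<notin> U"
      then have qF: "q \<in> frontier K" using qK frontier_iff by blast
      show False
      proof (rule no_bounded_approach[OF qF, of "\<lambda>x. x" "at q within L" "\<Phi> x0 + norm s * R0"])
        show "filterlim (\<lambda>x. x) (at q within U) (at q within L)"
          unfolding filterlim_def using LU by (simp add: filtermap_ident at_le)
        show "at q within L \<noteq> bot" by fact
        show "\<forall>\<^sub>F x in at q within L. F x \<le> \<Phi> x0 + norm s * R0"
          using Fbd by (simp add: eventually_at_filter)
      qed
    qed
    have lim: "(\<Phi> \<longlongrightarrow> \<Phi> q) (at q within L)"
      using PhiCont[OF qU] unfolding isCont_def by (rule tendsto_within_subset) simp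
    have "\<Phi> q \<le> \<Phi> x0"
      by (rule tendsto_upperbound[OF lim _ nb]) (use L_def in \<open>simp add: eventually_at_filter\<close>)
    then show "q \<in> L" using qU unfolding L_def by simp
  qed
  have Lcomp: "compact L" using Lbdd Lclosed compact_eq_bounded_closed by blast
  have Lne: "L \<noteq> {}" using x0 unfolding L_def by auto
  have Lcont: "continuous_on L \<Phi>" using PhiCont LU by (intro continuous_at_imp_continuous_on) auto
  obtain xm where xm: "xm \<in> L" "\<And>y. y \<in> L \<Longrightarrow> \<Phi> xm \<le> \<Phi> y"
    using continuous_attains_inf[OF Lcomp Lne Lcont] by blast
  have xmU: "xm \<in> U" using xm(1) LU by auto
  have minU: "\<Phi> xm \<le> \<Phi> y" if "y \<in> U" for y
  proof (cases "y \<in> L")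
    case False
    then have "\<Phi> y > \<Phi> x0" using that unfolding L_def by auto
    moreover have "\<Phi> xm \<le> \<Phi> x0" using xm(1) unfolding L_def by auto
    ultimately show ?thesis by simp
  qed (rule xm(2))
  have der: "(\<Phi> has_derivative (\<lambda>h. s \<bullet> h + F1 xm \<bullet> h)) (at xm)"
  proof -
    have "((\<lambda>x. s \<bullet> x) has_derivative (\<lambda>h. s \<bullet> h)) (at xm)" by (auto intro!: derivative_eq_intros)
    from has_derivative_add[OF this d1[OF xmU]] show ?thesis unfolding \<Phi>_def .
  qed
  have ev: "eventually (\<lambda>y. \<Phi> xm \<le> \<Phi> y) (at xm)"
    using eventually_at_in_open'[OF openU xmU] by eventually_elim (rule minU)
  from has_derivative_local_min[OF der ev]
  have "\<And>h. s \<bullet> h + F1 xm \<bullet> h = 0" by metis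
  then have "\<And>h. (s + F1 xm) \<bullet> h = 0" by (simp add: inner_add_left)
  from this[of "s + F1 xm"] have "F1 xm = - s" by (simp add: eq_neg_iff_add_eq_0 add.commute)
  then show ?thesis using xmU by blast
qed

abbreviation "V \<equiv> interior (dual_cone K)"

definition Xm :: "'a \<Rightarrow> 'a" where "Xm s = (THE x. x \<in> U \<and> F1 x = - s)"

lemma Xm: assumes s: "s \<in> V" shows "Xm s \<in> U" "F1 (Xm s) = - s"
proof -
  have ex: "\<exists>!x. x \<in> U \<and> F1 x = - s" using exists_x[OF s] F1_inj by metis
  show "Xm s \<in> U" "F1 (Xm s) = - s" using theI'[OF ex] unfolding Xm_def by auto
qed

lemma Xm_of: assumes x: "x \<in> U" shows "Xm (- F1 x) = x"
proof -
  have s: "- F1 x \<in> V" by (rule neg_grad_int[OF x])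
  show ?thesis using Xm[OF s] F1_inj[OF _ x] by simp
qed

lemma dual_val: assumes s: "s \<in> V" shows "dual_barrier K F s = - (s \<bullet> Xm s) - F (Xm s)"
  unfolding dual_barrier_def
proof (rule cSup_eq_maximum)
  show "- (s \<bullet> Xm s) - F (Xm s) \<in> (\<lambda>x. - (s \<bullet> x) - F x) ` U" using Xm[OF s] by blast
  fix z assume "z \<in> (\<lambda>x. - (s \<bullet> x) - F x) ` U"
  then obtain y where y: "y \<in> U" "z = - (s \<bullet> y) - F y" by blast
  have "F y \<ge> F (Xm s) + F1 (Xm s) \<bullet> (y - Xm s)" by (rule tangent[OF Xm(1)[OF s] y(1)])
  then show "z \<le> - (s \<bullet> Xm s) - F (Xm s)" using y Xm(2)[OF s] by (simp add: inner_diff_right)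
qed

lemma F1_cont: "continuous_on U F1"
  using has_derivative_continuous[OF d2] by (intro continuous_at_imp_continuous_on) auto

lemma Xm_deriv: assumes s: "s \<in> V"
  shows "(Xm has_derivative (\<lambda>h. inv (H (Xm s)) (- h))) (at s)"
proof -
  let ?x = "Xm s"
  have xU: "?x \<in> U" using Xm(1)[OF s] .
  have bij: "bij (H ?x)" by (rule H_bij[OF xU])
  have "(Xm has_derivative (\<lambda>h. inv (H ?x) (- h))) (at ((\<lambda>x. - F1 x) ?x))"
  proof (rule has_derivative_inverse_strong[OF openU xU])
    show "continuous_on U (\<lambda>x. - F1 x)" by (intro continuous_intros F1_cont)
    show "\<And>x. x \<in> U \<Longrightarrow> Xm (- F1 x) = x" by (rule Xm_of)
    show "((\<lambda>x. - F1 x) has_derivative (\<lambda>h. - H ?x h)) (at ?x)" by (rule has_derivative_minus[OF d2[OF xU]])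
    show "(\<lambda>h. - H ?x h) \<circ> (\<lambda>h. inv (H ?x) (- h)) = id"
      using bij by (auto simp: bij_is_surj surj_f_inv_f)
  qed
  then show ?thesis using Xm(2)[OF s] by simp
qed

definition Fs :: "'a \<Rightarrow> real" where "Fs s = - (s \<bullet> Xm s) - F (Xm s)"

lemma Fs_deriv: assumes s: "s \<in> V" shows "(Fs has_derivative (\<lambda>h. - (h \<bullet> Xm s))) (at s)"
proof -
  let ?D = "\<lambda>h. inv (H (Xm s)) (- h)"
  have dX: "(Xm has_derivative ?D) (at s)" by (rule Xm_deriv[OF s])
  have d_in: "((\<lambda>s. s \<bullet> Xm s) has_derivative (\<lambda>h. s \<bullet> ?D h + h \<bullet> Xm s)) (at s)"
    by (rule has_derivative_inner[OF has_derivative_ident dX])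
  have d_F: "((\<lambda>s. F (Xm s)) has_derivative (\<lambda>h. F1 (Xm s) \<bullet> ?D h)) (at s)"
    using has_derivative_compose[OF dX d1[OF Xm(1)[OF s]]] by (simp add: o_def)
  have "(Fs has_derivative (\<lambda>h. - (s \<bullet> ?D h + h \<bullet> Xm s) - F1 (Xm s) \<bullet> ?D h)) (at s)"
    unfolding Fs_def[abs_def] by (intro has_derivative_diff has_derivative_minus d_in d_F)
  moreover have "(\<lambda>h. - (s \<bullet> ?D h + h \<bullet> Xm s) - F1 (Xm s) \<bullet> ?D h) = (\<lambda>h. - (h \<bullet> Xm s))"
    using Xm(2)[OF s] by (auto simp: algebra_simps)
  ultimately show ?thesis by simp
qed

end



definition symm :: "('b::real_inner \<Rightarrow> 'b) \<Rightarrow> bool" where "symm P \<longleftrightarrow> (\<forall>u v. P u \<bullet> v = P v \<bullet> u)"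
definition posd :: "('b::real_inner \<Rightarrow> 'b) \<Rightarrow> bool" where "posd P \<longleftrightarrow> (\<forall>u. u \<noteq> 0 \<longrightarrow> P u \<bullet> u > 0)"

lemma posd_psd: "posd P \<Longrightarrow> P u \<bullet> u \<ge> 0"
  unfolding posd_def by (cases "u = 0") (auto simp: less_imp_le)

lemma posd_inj: assumes "linear P" "posd P" shows "inj P"
proof (rule linear_injective_0[OF assms(1), THEN iffD2], intro allI impI)
  fix u assume "P u = 0"
  then have "P u \<bullet> u = 0" by simp
  then show "u = 0" using assms(2) unfolding posd_def by force
qed

lemma posd_bij: fixes P :: "'b::euclidean_space \<Rightarrow> 'b" assumes "linear P" "posd P" shows "bij P"
  using posd_inj[OF assms] linear_injective_imp_surjective[OF assms(1)] by (simp add: bij_def)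

lemma inv_props:
  fixes P :: "'b::euclidean_space \<Rightarrow> 'b"
  assumes lin: "linear P" and sym: "symm P" and pd: "posd P"
  shows "linear (inv P)" "\<And>v. P (inv P v) = v" "\<And>u. inv P (P u) = u" "symm (inv P)" "posd (inv P)"
proof -
  have bij: "bij P" by (rule posd_bij[OF lin pd])
  show PI: "\<And>v. P (inv P v) = v" using bij by (simp add: bij_is_surj surj_f_inv_f)
  show IP: "\<And>u. inv P (P u) = u" using bij by (simp add: bij_is_inj)
  show "linear (inv P)" using linear_surjective_isomorphism[OF lin] bij
    by (metis IP PI bij_is_surj linear_inverse_left lin comp_apply fun_eq_iff id_apply
        linear_surjective_right_inverse)
  show "symm (inv P)" unfolding symm_def
  proof (intro allI)
    fix u v
    have "inv P u \<bullet> v = inv P u \<bullet> P (inv P v)" using PI by simp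
    also have "\<dots> = P (inv P v) \<bullet> inv P u" by (simp add: inner_commute)
    also have "\<dots> = P (inv P u) \<bullet> inv P v" using sym unfolding symm_def by metis
    also have "\<dots> = inv P v \<bullet> u" using PI by (simp add: inner_commute)
    finally show "inv P u \<bullet> v = inv P v \<bullet> u" .
  qed
  show "posd (inv P)" unfolding posd_def
  proof (intro allI impI)
    fix u :: 'b assume u: "u \<noteq> 0"
    have nz: "inv P u \<noteq> 0" using u PI lin linear_0 by metis
    have "inv P u \<bullet> u = P (inv P u) \<bullet> inv P u" using PI by (simp add: inner_commute)
    then show "inv P u \<bullet> u > 0" using pd nz unfolding posd_def by simp
  qed
qed

lemma gmap_props:
  fixes A :: "'e::euclidean_space \<Rightarrow> 'h::euclidean_space" and P :: "'e \<Rightarrow> 'e"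
  assumes A: "linear A" "surj A" and lin: "linear P" and sym: "symm P" and pd: "posd P"
  shows "linear (Gmap A P)" "symm (Gmap A P)" "posd (Gmap A P)"
    "\<And>h. Gmap A P h \<bullet> h = inv P (adjoint A h) \<bullet> adjoint A h"
proof -
  note I = inv_props[OF lin sym pd]
  have lAt: "linear (adjoint A)" by (rule adjoint_linear[OF A(1)])
  have injAt: "inj (adjoint A)" using A by simp
  show quad: "\<And>h. Gmap A P h \<bullet> h = inv P (adjoint A h) \<bullet> adjoint A h"
    unfolding Gmap_def using adjoint_works[OF A(1)] by simp
  show "linear (Gmap A P)" unfolding Gmap_def
    using linear_compose[OF linear_compose[OF lAt I(1)] A(1)] by (simp add: o_def)
  show "symm (Gmap A P)" unfolding symm_def Gmap_def
  proof (intro allI)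
    fix u v
    have "A (inv P (adjoint A u)) \<bullet> v = inv P (adjoint A u) \<bullet> adjoint A v" using adjoint_works[OF A(1)] by simp
    also have "\<dots> = inv P (adjoint A v) \<bullet> adjoint A u" using I(4) unfolding symm_def by metis
    also have "\<dots> = A (inv P (adjoint A v)) \<bullet> u" using adjoint_works[OF A(1)] by simp
    finally show "A (inv P (adjoint A u)) \<bullet> v = A (inv P (adjoint A v)) \<bullet> u" .
  qed
  show "posd (Gmap A P)" unfolding posd_def
  proof (intro allI impI)
    fix h :: 'h assume h: "h \<noteq> 0"
    have "adjoint A h \<noteq> 0" using h injAt lAt linear_injective_0 by blast
    then have "inv P (adjoint A h) \<bullet> adjoint A h > 0" using I(5) unfolding posd_def by blast
    then show "Gmap A P h \<bullet> h > 0" using quad by simp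
  qed
qed

definition qn :: "('b::real_inner \<Rightarrow> 'b) \<Rightarrow> 'b \<Rightarrow> real" where "qn Q v = sqrt (Q v \<bullet> v)"

lemma qn_cs: assumes "linear Q" "symm Q" "posd Q" shows "\<bar>Q w \<bullet> z\<bar> \<le> qn Q w * qn Q z"
  unfolding qn_def using psd_cs_abs[OF assms(1), of w z] assms(2,3) posd_psd unfolding symm_def by blast

lemma qn_sq: assumes "posd Q" shows "(qn Q v)\<^sup>2 = Q v \<bullet> v"
  unfolding qn_def using posd_psd[OF assms, of v] by simp

lemma qn_nonneg: "posd Q \<Longrightarrow> qn Q v \<ge> 0" unfolding qn_def using posd_psd[of Q v] by simp

lemma qn_triangle: assumes lin: "linear Q" "symm Q" "posd Q" shows "qn Q (a + b) \<le> qn Q a + qn Q b"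
proof -
  have "Q (a + b) \<bullet> (a + b) = Q a \<bullet> a + 2 * (Q a \<bullet> b) + Q b \<bullet> b"
    using lin(2) unfolding symm_def by (simp add: linear_add[OF lin(1)] inner_add_left inner_add_right)
  also have "\<dots> \<le> (qn Q a)\<^sup>2 + 2 * (qn Q a * qn Q b) + (qn Q b)\<^sup>2"
    using qn_cs[OF lin, of a b] qn_sq[OF lin(3)] by (simp add: abs_le_iff)
  also have "\<dots> = (qn Q a + qn Q b)\<^sup>2" by (simp add: power2_eq_square algebra_simps)
  finally have "(qn Q (a + b))\<^sup>2 \<le> (qn Q a + qn Q b)\<^sup>2" using qn_sq[OF lin(3)] by simp
  then show ?thesis using qn_nonneg[OF lin(3)] by (meson abs_le_square_iff abs_of_nonneg add_nonneg_nonneg power2_le_imp_le)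
qed

lemma qn_scale: assumes "linear Q" shows "qn Q (c *\<^sub>R a) = \<bar>c\<bar> * qn Q a"
proof -
  have "Q (c *\<^sub>R a) \<bullet> (c *\<^sub>R a) = c\<^sup>2 * (Q a \<bullet> a)" by (simp add: linear_cmul[OF assms] power2_eq_square)
  then show ?thesis unfolding qn_def by (simp add: real_sqrt_mult)
qed




lemma final_bounds:
  fixes G M :: "'h::euclidean_space \<Rightarrow> 'h"
  assumes G: "linear G" "symm G" "posd G" and M: "linear M" "symm M" "posd M" and R: "R \<ge> 0"
    and dik: "\<And>h. M h \<bullet> h \<le> 1 \<Longrightarrow> qn G h \<le> R"
  shows "\<And>h. G h \<bullet> h \<le> R\<^sup>2 * (M h \<bullet> h)"
    and "\<And>g. qn G (inv M g) \<le> R * sqrt (g \<bullet> inv M g)"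
    and "\<And>g. qn (inv G) g = 1 \<Longrightarrow> qn G (inv M g) \<le> R\<^sup>2"
proof -
  note IM = inv_props[OF M]
  note IG = inv_props[OF G]
  show c1: "G h \<bullet> h \<le> R\<^sup>2 * (M h \<bullet> h)" for h
  proof (cases "h = 0")
    case True then show ?thesis using linear_0[OF G(1)] linear_0[OF M(1)] by simp
  next
    case False
    define m where "m = M h \<bullet> h"
    have mpos: "m > 0" using M(3) False unfolding posd_def m_def by blast
    define h' where "h' = (1 / sqrt m) *\<^sub>R h"
    have "M h' \<bullet> h' = (1 / sqrt m)\<^sup>2 * m" unfolding h'_def m_def
      by (simp add: linear_cmul[OF M(1)] power2_eq_square)
    also have "\<dots> = 1" using mpos by (simp add: power_divide)
    finally have "qn G h' \<le> R" using dik by simp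
    moreover have "qn G h' = qn G h / sqrt m" unfolding h'_def qn_scale[OF G(1)] using mpos by simp
    ultimately have "qn G h \<le> R * sqrt m" using mpos by (simp add: divide_le_eq)
    then have "(qn G h)\<^sup>2 \<le> (R * sqrt m)\<^sup>2" using qn_nonneg[OF G(3)] by (simp add: power_mono)
    then show ?thesis using qn_sq[OF G(3), of h] mpos unfolding m_def by (simp add: power_mult_distrib)
  qed
  have c3sq: "(qn G (inv M g))\<^sup>2 \<le> R\<^sup>2 * (g \<bullet> inv M g)" for g
  proof -
    have "(qn G (inv M g))\<^sup>2 = G (inv M g) \<bullet> inv M g" by (rule qn_sq[OF G(3)])
    also have "\<dots> \<le> R\<^sup>2 * (M (inv M g) \<bullet> inv M g)" by (rule c1)
    also have "M (inv M g) \<bullet> inv M g = g \<bullet> inv M g" using IM(2) by simp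
    finally show ?thesis .
  qed
  show "qn G (inv M g) \<le> R * sqrt (g \<bullet> inv M g)" for g
  proof -
    have nn: "g \<bullet> inv M g \<ge> 0" using posd_psd[OF IM(5), of g] inner_commute[of g "inv M g"] by linarith
    have "(R * sqrt (g \<bullet> inv M g))\<^sup>2 = R\<^sup>2 * (g \<bullet> inv M g)" using nn by (simp add: power_mult_distrib)
    then have "(qn G (inv M g))\<^sup>2 \<le> (R * sqrt (g \<bullet> inv M g))\<^sup>2" using c3sq[of g] by linarith
    moreover have "R * sqrt (g \<bullet> inv M g) \<ge> 0" using R nn by simp
    ultimately show ?thesis by (rule power2_le_imp_le)
  qed
  show "qn G (inv M g) \<le> R\<^sup>2" if g1: "qn (inv G) g = 1" for g
  proof -
    define w where "w = inv M g"
    define v where "v = inv G g"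
    have "inv G g \<bullet> g = 1" using g1 unfolding qn_def by simp
    moreover have "G v \<bullet> v = g \<bullet> v" unfolding v_def using IG(2) by simp
    moreover have "g \<bullet> v = inv G g \<bullet> g" unfolding v_def by (rule inner_commute)
    ultimately have qv: "qn G v = 1" unfolding qn_def by simp
    have "g \<bullet> w = G v \<bullet> w" unfolding v_def using IG(2) by simp
    also have "\<dots> \<le> qn G v * qn G w" using qn_cs[OF G, of v w] by simp
    finally have gw: "g \<bullet> w \<le> qn G w" using qv by simp
    have "(qn G w)\<^sup>2 \<le> R\<^sup>2 * (g \<bullet> w)" using c3sq[of g] unfolding w_def .
    also have "\<dots> \<le> R\<^sup>2 * qn G w" using gw by (simp add: mult_left_mono)
    finally have sq: "(qn G w)\<^sup>2 \<le> R\<^sup>2 * qn G w" .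
    show ?thesis
    proof (cases "qn G w = 0")
      case False
      then have "qn G w > 0" using qn_nonneg[OF G(3), of w] by simp
      then show ?thesis using sq unfolding w_def by (simp add: power2_eq_square)
    qed (use R w_def in simp)
  qed
qed

context nbar begin

lemma H_props: assumes x: "x \<in> U" shows "linear (H x)" "symm (H x)" "posd (H x)"
proof -
  show "linear (H x)" by (rule H_linear)
  show "symm (H x)" unfolding symm_def using H_sym[OF x] by blast
  show "posd (H x)" unfolding posd_def using H_psd[OF x] H_nondeg[OF x]
    by (metis order_le_imp_less_or_eq)
qed

lemma dikin_dual: assumes x: "x \<in> U" and d: "inv (H x) d \<bullet> d \<le> 1"
  shows "- F1 x + d \<in> dual_cone K"
  unfolding dual_cone_def
proof (intro CollectI ballI)
  fix z assume z: "z \<in> K"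
  note I = inv_props[OF H_props[OF x]]
  define w where "w = inv (H x) d"
  have dw: "H x w = d" unfolding w_def using I(2) .
  have "\<bar>d \<bullet> z\<bar> \<le> sqrt (H x w \<bullet> w) * sqrt (H x z \<bullet> z)" using H_cs[OF x, of w z] dw by simp
  also have "H x w \<bullet> w = inv (H x) d \<bullet> d" using dw unfolding w_def by (simp add: inner_commute)
  also have "sqrt (inv (H x) d \<bullet> d) * sqrt (H x z \<bullet> z) \<le> 1 * sqrt (H x z \<bullet> z)"
    using d H_psd[OF x, of z] by (intro mult_right_mono) auto
  finally have "\<bar>d \<bullet> z\<bar> \<le> sqrt (H x z \<bullet> z)" by simp
  moreover have "sqrt (H x z \<bullet> z) \<le> - (F1 x \<bullet> z)" by (rule grad_lower[OF x z])
  moreover have "(- F1 x + d) \<bullet> z = - (F1 x \<bullet> z) + d \<bullet> z" by (simp add: inner_add_left inner_diff_left)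
  ultimately show "0 \<le> (- F1 x + d) \<bullet> z" by linarith
qed

lemma nu_bound:
  fixes A :: "'a \<Rightarrow> 'h::euclidean_space"
  assumes x: "x \<in> U" and A: "linear A" "surj A"
  shows "A x \<bullet> inv (Gmap A (H x)) (A x) \<le> \<nu>"
proof -
  note HP = H_props[OF x]
  note I = inv_props[OF HP]
  note GP = gmap_props[OF A HP]
  note IM = inv_props[OF GP(1-3)]
  define M where "M = Gmap A (H x)"
  define w where "w = inv M (A x)"
  define q where "q = inv (H x) (adjoint A w)"
  have Mw: "M w = A x" unfolding w_def M_def using IM(2) by simp
  have Aq: "A q = A x" using Mw unfolding M_def Gmap_def q_def by simp
  have Hq: "H x q = adjoint A w" unfolding q_def using I(2) .
  have e1: "A x \<bullet> w = H x q \<bullet> q"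
  proof -
    have "A x \<bullet> w = A q \<bullet> w" using Aq by simp
    also have "\<dots> = q \<bullet> adjoint A w" using adjoint_works[OF A(1)] by simp
    also have "\<dots> = H x q \<bullet> q" using Hq by (simp add: inner_commute)
    finally show ?thesis .
  qed
  have e2: "H x q \<bullet> (x - q) = 0"
  proof -
    have "H x q \<bullet> (x - q) = (x - q) \<bullet> adjoint A w" using Hq by (simp add: inner_commute)
    also have "\<dots> = A (x - q) \<bullet> w" using adjoint_works[OF A(1)] by simp
    also have "A (x - q) = 0" using Aq linear_diff[OF A(1)] by simp
    finally show ?thesis by simp
  qed
  have e3: "H x (x - q) \<bullet> q = 0" using e2 H_sym[OF x] by metis
  have "H x x \<bullet> x = H x (q + (x - q)) \<bullet> (q + (x - q))" by simp
  also have "\<dots> = H x q \<bullet> q + H x q \<bullet> (x - q) + H x (x - q) \<bullet> q + H x (x - q) \<bullet> (x - q)"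
    by (simp only: linear_add[OF H_linear] inner_add_left inner_add_right add.assoc)
  finally have "H x x \<bullet> x = H x q \<bullet> q + H x (x - q) \<bullet> (x - q)" using e2 e3 by simp
  moreover have "H x x \<bullet> x = \<nu>" using H_self[OF x] F1_inner_self[OF x] by simp
  moreover have "H x (x - q) \<bullet> (x - q) \<ge> 0" by (rule H_psd[OF x])
  ultimately have "H x q \<bullet> q \<le> \<nu>" by linarith
  then show ?thesis using e1 unfolding w_def M_def by simp
qed

end

lemma grad_eq: assumes "(f has_derivative (\<lambda>u. g \<bullet> u)) (at y)" shows "grad f y = g"
  unfolding grad_def
proof (rule the_equality[where P="\<lambda>g. (f has_derivative (\<lambda>u. g \<bullet> u)) (at y)", OF assms])
  fix g' assume "(f has_derivative (\<lambda>u. g' \<bullet> u)) (at y)"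
  from has_derivative_unique[OF assms this] have "\<And>u. g \<bullet> u = g' \<bullet> u" by metis
  then have "(g - g') \<bullet> (g - g') = 0" by (simp add: inner_diff_left)
  then show "g' = g" by simp
qed

lemma hess_eq: assumes "(grad f has_derivative L) (at y)" shows "hess f y = L"
  unfolding hess_def using frechet_derivative_at[OF assms] by simp




lemma dual_cone_convex: "convex (dual_cone K)"
  unfolding convex_def dual_cone_def
  by (auto simp: inner_add_left intro!: add_nonneg_nonneg mult_nonneg_nonneg)

lemma int_Q_sV:
  fixes A :: "'e::euclidean_space \<Rightarrow> 'h::euclidean_space"
  assumes A: "linear A" and y0: "c - adjoint A y0 \<in> interior (dual_cone K)"
    and y: "y \<in> interior {y. c - adjoint A y \<in> dual_cone K}"
  shows "c - adjoint A y \<in> interior (dual_cone K)"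
proof -
  let ?At = "adjoint A"
  have lAt: "linear ?At" by (rule adjoint_linear[OF A])
  obtain e where e: "e > 0" "ball y e \<subseteq> {y. c - adjoint A y \<in> dual_cone K}" using y mem_interior by blast
  define l where "l = e / (2 * (norm (y - y0) + 1))"
  have lpos: "l > 0" unfolding l_def using e by (simp add: add_nonneg_pos)
  define y' where "y' = y + l *\<^sub>R (y - y0)"
  have "dist y y' = l * norm (y - y0)" unfolding y'_def dist_norm using lpos by simp
  also have "\<dots> < e"
  proof -
    have "l * norm (y - y0) \<le> l * (norm (y - y0) + 1)" using lpos by simp
    also have "\<dots> = e / 2"
    proof -
      have "norm (y - y0) + 1 > 0" by (simp add: add_nonneg_pos)
      then show ?thesis unfolding l_def by (simp add: field_simps)
    qed
    finally show ?thesis using e by simp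
  qed
  finally have y'Q: "c - ?At y' \<in> dual_cone K" using e by auto
  define \<mu> where "\<mu> = l / (1 + l)"
  have mu: "0 < \<mu>" "\<mu> \<le> 1" unfolding \<mu>_def using lpos by auto
  have sh: "(c - ?At y') - \<mu> *\<^sub>R ((c - ?At y') - (c - ?At y0)) \<in> interior (dual_cone K)"
    by (rule mem_interior_convex_shrink[OF dual_cone_convex y0 y'Q mu])
  define a where "a = ?At y"
  define a0 where "a0 = ?At y0"
  have Ay': "?At y' = a + l *\<^sub>R (a - a0)"
    unfolding y'_def a_def a0_def by (simp add: linear_add[OF lAt] linear_cmul[OF lAt] linear_diff[OF lAt])
  have m1: "\<mu> * (1 + l) = l" unfolding \<mu>_def using lpos by simp
  have "(c - (a + l *\<^sub>R (a - a0))) - (c - a0) = - ((1 + l) *\<^sub>R (a - a0))" by (simp add: algebra_simps)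
  then have "\<mu> *\<^sub>R ((c - (a + l *\<^sub>R (a - a0))) - (c - a0)) = - (l *\<^sub>R (a - a0))" using m1 by simp
  then have "(c - ?At y') - \<mu> *\<^sub>R ((c - ?At y') - (c - ?At y0)) = c - a"
    unfolding Ay' a0_def[symmetric] by (simp add: algebra_simps)
  then have "(c - ?At y') - \<mu> *\<^sub>R ((c - ?At y') - (c - ?At y0)) = c - ?At y" unfolding a_def .
  then show ?thesis using sh by metis
qed

theorem mainTheorem7:
  fixes K :: "'e::euclidean_space set" and F :: "'e \<Rightarrow> real" and \<nu> :: real
    and A :: "'e \<Rightarrow> 'h::euclidean_space" and c :: 'e and b :: 'h
    and x1 :: 'e and y1 :: 'h and s_star :: 'e and y_star :: 'h and \<gamma>d :: real
  assumes K: "regular_cone K"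
    and F: "normal_barrier \<nu> K F"
    and A: "linear A" "surj A"
    and primal_strict: "\<exists>x\<in>interior K. A x = b"
    and dual_strict: "\<exists>y. c - adjoint A y \<in> interior (dual_cone K)"
    and central_x1: "x1 \<in> interior K" "A x1 = b" "c - adjoint A y1 = - grad F x1"
    and opt_pair: "s_star + adjoint A y_star = c" "s_star \<in> dual_cone K"
      "b \<bullet> y_star = Sup {b \<bullet> y | y. c - adjoint A y \<in> dual_cone K}"
    and gamma: "\<gamma>d > 0"
    and assumption1: "\<forall>y. c - adjoint A y \<in> dual_cone K \<longrightarrow>
        Sup {b \<bullet> y | y. c - adjoint A y \<in> dual_cone K} - b \<bullet> y
          \<ge> \<gamma>d * G_norm_primal A (hess F x1) (y - y_star)"
  shows "\<forall>y \<in> interior {y. c - adjoint A y \<in> dual_cone K}.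
    (let f = (\<lambda>y. dual_barrier K F (c - adjoint A y));
         fstar = Sup {b \<bullet> y | y. c - adjoint A y \<in> dual_cone K};
         B = hess F x1
     in G_opnorm A B (inv (hess f y)) \<le> 4 / \<gamma>d\<^sup>2 * (fstar - b \<bullet> y)\<^sup>2 \<and>
        G_norm_primal A B (inv (hess f y) (grad f y)) \<le> 2 * sqrt \<nu> / \<gamma>d * (fstar - b \<bullet> y))"
proof -
  obtain F1 F2 and F3 :: "'e \<Rightarrow> 'e \<Rightarrow>\<^sub>L ('e \<Rightarrow>\<^sub>L 'e)" where
    der: "\<forall>x\<in>interior K.
           (F has_derivative (\<lambda>u. F1 x \<bullet> u)) (at x) \<and>
           (F1 has_derivative blinfun_apply (F2 x)) (at x) \<and>
           (F2 has_derivative blinfun_apply (F3 x)) (at x)"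
    and ineq: "\<forall>x\<in>interior K. \<forall>u.
           \<bar>blinfun_apply (blinfun_apply (F3 x) u) u \<bullet> u\<bar>
              \<le> 2 * (blinfun_apply (F2 x) u \<bullet> u) powr (3/2) \<and>
           (F1 x \<bullet> u)\<^sup>2 \<le> \<nu> * (blinfun_apply (F2 x) u \<bullet> u)"
    and conv: "convex_on (interior K) F"
    and bar: "\<forall>x\<in>frontier K. filterlim F at_top (at x within interior K)"
    and hom: "\<forall>x\<in>interior K. \<forall>t>0. F (t *\<^sub>R x) = F x - \<nu> * ln t"
    using F unfolding normal_barrier_def by blast
  interpret nb: nbar K F \<nu> F1 F2 F3
    by unfold_locales (use K der ineq conv bar hom in auto)
  let ?At = "adjoint A"
  let ?Q = "{y. c - adjoint A y \<in> dual_cone K}"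
  let ?fstar = "Sup {b \<bullet> y | y. c - adjoint A y \<in> dual_cone K}"
  define f where "f = (\<lambda>y. dual_barrier K F (c - adjoint A y))"
  have lAt: "linear ?At" by (rule adjoint_linear[OF A(1)])
  have blAt: "bounded_linear ?At" using lAt linear_conv_bounded_linear by blast
  have blA: "bounded_linear A" using A(1) linear_conv_bounded_linear by blast
  obtain y0 where y0: "c - adjoint A y0 \<in> interior (dual_cone K)" using dual_strict by blast
  have sV: "c - ?At y \<in> interior (dual_cone K)" if "y \<in> interior ?Q" for y
    by (rule int_Q_sV[OF A(1) y0 that])
  have dS: "((\<lambda>y. c - ?At y) has_derivative (\<lambda>h. - ?At h)) (at y)" for y
    using has_derivative_diff[OF has_derivative_const bounded_linear_imp_has_derivative[OF blAt]] by simp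
  have oQ: "open (interior ?Q)" by simp
  have gradf: "grad f y = A (nb.Xm (c - ?At y))" if y: "y \<in> interior ?Q" for y
  proof -
    let ?s = "c - ?At y"
    have d: "((\<lambda>y. nb.Fs (c - ?At y)) has_derivative (\<lambda>h. - ((- ?At h) \<bullet> nb.Xm ?s))) (at y)"
      using has_derivative_compose[OF dS nb.Fs_deriv[OF sV[OF y]]] by (simp add: o_def)
    have "(\<lambda>h. - ((- ?At h) \<bullet> nb.Xm ?s)) = (\<lambda>h. A (nb.Xm ?s) \<bullet> h)"
    proof
      fix h
      have "- ((- ?At h) \<bullet> nb.Xm ?s) = ?At h \<bullet> nb.Xm ?s" by simp
      also have "\<dots> = nb.Xm ?s \<bullet> ?At h" by (rule inner_commute)
      also have "\<dots> = A (nb.Xm ?s) \<bullet> h" by (rule adjoint_works[OF A(1)])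
      finally show "- ((- ?At h) \<bullet> nb.Xm ?s) = A (nb.Xm ?s) \<bullet> h" .
    qed
    with d have "((\<lambda>y. nb.Fs (c - ?At y)) has_derivative (\<lambda>h. A (nb.Xm ?s) \<bullet> h)) (at y)" by simp
    then have "(f has_derivative (\<lambda>h. A (nb.Xm ?s) \<bullet> h)) (at y)"
    proof (rule has_derivative_transform_within_open[OF _ oQ y])
      fix y' assume "y' \<in> interior ?Q"
      then show "nb.Fs (c - ?At y') = f y'" unfolding f_def nb.Fs_def using nb.dual_val[OF sV] by simp
    qed
    then show ?thesis by (rule grad_eq)
  qed
  have hessf: "hess f y = Gmap A (blinfun_apply (F2 (nb.Xm (c - ?At y))))" if y: "y \<in> interior ?Q" for y
  proof -
    let ?s = "c - ?At y"
    let ?x = "nb.Xm ?s"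
    have d1: "((\<lambda>y. nb.Xm (c - ?At y)) has_derivative
        (\<lambda>h. inv (blinfun_apply (F2 ?x)) (- (- ?At h)))) (at y)"
      using has_derivative_compose[OF dS nb.Xm_deriv[OF sV[OF y]]] by (simp add: o_def)
    have d2: "((\<lambda>y. A (nb.Xm (c - ?At y))) has_derivative
        (\<lambda>h. A (inv (blinfun_apply (F2 ?x)) (- (- ?At h))))) (at y)"
      using has_derivative_compose[OF d1 bounded_linear_imp_has_derivative[OF blA]] by (simp add: o_def)
    have "(grad f has_derivative (\<lambda>h. A (inv (blinfun_apply (F2 ?x)) (- (- ?At h))))) (at y)"
    proof (rule has_derivative_transform_within_open[OF d2 oQ y])
      fix y' assume "y' \<in> interior ?Q"
      then show "A (nb.Xm (c - ?At y')) = grad f y'" using gradf by simp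
    qed
    then have "hess f y = (\<lambda>h. A (inv (blinfun_apply (F2 ?x)) (- (- ?At h))))" by (rule hess_eq)
    then show ?thesis unfolding Gmap_def by simp
  qed
  have hessF: "hess F x1 = blinfun_apply (F2 x1)"
  proof -
    have "(grad F has_derivative blinfun_apply (F2 x1)) (at x1)"
    proof (rule has_derivative_transform_within_open[OF nb.d2[OF central_x1(1)] open_interior central_x1(1)])
      fix x assume "x \<in> interior K"
      then show "F1 x = grad F x" using grad_eq[OF nb.d1] by simp
    qed
    then show ?thesis by (rule hess_eq)
  qed
  define G where "G = Gmap A (blinfun_apply (F2 x1))"
  note HP1 = nb.H_props[OF central_x1(1)]
  note GP = gmap_props[OF A HP1, folded G_def]
  have Gn: "G_norm_primal A (hess F x1) v = qn G v" for v
    unfolding G_norm_primal_def qn_def G_def hessF ..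
  have Gd: "G_norm_dual A (hess F x1) g = qn (inv G) g" for g
    unfolding G_norm_dual_def qn_def G_def hessF by (simp add: inner_commute)
  have fnn: "?fstar - b \<bullet> y \<ge> 0" if "y \<in> ?Q" for y
  proof -
    have "0 \<le> \<gamma>d * qn G (y - y_star)" using gamma qn_nonneg[OF GP(3)] by simp
    also have "\<dots> \<le> ?fstar - b \<bullet> y" using assumption1 that Gn by simp
    finally show ?thesis .
  qed
  show ?thesis
    unfolding Let_def f_def[symmetric]
  proof (intro ballI conjI)
    fix y assume y: "y \<in> interior ?Q"
    have yQ: "y \<in> ?Q" using y interior_subset by blast
    let ?s = "c - ?At y"
    let ?x = "nb.Xm ?s"
    have xU: "?x \<in> interior K" using nb.Xm(1)[OF sV[OF y]] .
    have F1x: "F1 ?x = - ?s" using nb.Xm(2)[OF sV[OF y]] .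
    note HP = nb.H_props[OF xU]
    define M where "M = Gmap A (blinfun_apply (F2 ?x))"
    note MP = gmap_props[OF A HP, folded M_def]
    have hfy: "hess f y = M" unfolding M_def by (rule hessf[OF y])
    define R where "R = (?fstar - b \<bullet> y) / \<gamma>d"
    have R0: "R \<ge> 0" unfolding R_def using fnn[OF yQ] gamma by simp
    have dik: "qn G h \<le> R" if hM: "M h \<bullet> h \<le> 1" for h
    proof -
      have lI: "linear (inv (blinfun_apply (F2 ?x)))" by (rule inv_props(1)[OF HP])
      have q1: "inv (blinfun_apply (F2 ?x)) (?At h) \<bullet> ?At h \<le> 1"
        using hM MP(4)[of h] unfolding M_def by simp
      have q2: "inv (blinfun_apply (F2 ?x)) (- ?At h) \<bullet> (- ?At h) \<le> 1"
        using q1 linear_neg[OF lI] by simp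
      have "- F1 ?x + ?At h \<in> dual_cone K" by (rule nb.dikin_dual[OF xU q1])
      then have ym: "y - h \<in> ?Q" using F1x by (simp add: linear_diff[OF lAt] algebra_simps)
      have "- F1 ?x + - ?At h \<in> dual_cone K" by (rule nb.dikin_dual[OF xU q2])
      then have yp: "y + h \<in> ?Q" using F1x by (simp add: linear_add[OF lAt] algebra_simps)
      have a1: "\<gamma>d * qn G (y + h - y_star) \<le> ?fstar - b \<bullet> (y + h)" using assumption1 yp Gn by simp
      have a2: "\<gamma>d * qn G (y - h - y_star) \<le> ?fstar - b \<bullet> (y - h)" using assumption1 ym Gn by simp
      have "qn G (2 *\<^sub>R h) = qn G ((y + h - y_star) + (- 1) *\<^sub>R (y - h - y_star))"
        by (simp add: algebra_simps scaleR_2)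
      also have "\<dots> \<le> qn G (y + h - y_star) + qn G ((- 1) *\<^sub>R (y - h - y_star))"
        by (rule qn_triangle[OF GP(1-3)])
      also have "\<dots> = qn G (y + h - y_star) + qn G (y - h - y_star)"
        using qn_scale[OF GP(1), of "- 1" "y - h - y_star"] by (simp only: abs_neg_one mult_1)
      finally have "2 * qn G h \<le> qn G (y + h - y_star) + qn G (y - h - y_star)"
        using qn_scale[OF GP(1), of 2 h] by simp
      then have "\<gamma>d * (2 * qn G h) \<le> \<gamma>d * qn G (y + h - y_star) + \<gamma>d * qn G (y - h - y_star)"
        using gamma by (simp add: distrib_left[symmetric] mult_left_mono)
      also have "\<dots> \<le> 2 * (?fstar - b \<bullet> y)"
      proof -
        have "b \<bullet> (y + h) = b \<bullet> y + b \<bullet> h" "b \<bullet> (y - h) = b \<bullet> y - b \<bullet> h"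
          by (simp_all add: inner_add_right inner_diff_right)
        moreover have "\<gamma>d * qn G (y + h - y_star) + \<gamma>d * qn G (y - h - y_star)
            \<le> (?fstar - b \<bullet> (y + h)) + (?fstar - b \<bullet> (y - h))" by (rule add_mono[OF a1 a2])
        ultimately show ?thesis by (simp add: algebra_simps)
      qed
      finally show ?thesis unfolding R_def using gamma by (simp add: field_simps)
    qed
    note FB = final_bounds[OF GP(1-3) MP(1-3) R0 dik]
    have nonempty: "\<exists>g. qn (inv G) g = 1"
    proof -
      obtain e :: 'h where e: "e \<in> Basis" using nonempty_Basis by blast
      then have enz: "e \<noteq> 0" by auto
      note IG = inv_props[OF GP(1-3)]
      define q where "q = inv G e \<bullet> e"
      have qpos: "q > 0" unfolding q_def using IG(5) enz unfolding posd_def by blast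
      define g where "g = (1 / sqrt q) *\<^sub>R e"
      have "inv G g \<bullet> g = (1 / sqrt q)\<^sup>2 * q" unfolding g_def q_def
        by (simp add: linear_cmul[OF IG(1)] power2_eq_square)
      also have "\<dots> = 1" using qpos by (simp add: power_divide)
      finally have "qn (inv G) g = 1" unfolding qn_def by simp
      then show ?thesis by blast
    qed
    show "G_opnorm A (hess F x1) (inv (hess f y)) \<le> 4 / \<gamma>d\<^sup>2 * (?fstar - b \<bullet> y)\<^sup>2"
    proof -
      have "G_opnorm A (hess F x1) (inv (hess f y)) = Sup {qn G (inv M h) | h. qn (inv G) h = 1}"
        unfolding G_opnorm_def Gn Gd hfy ..
      also have "\<dots> \<le> R\<^sup>2"
        by (rule cSup_least) (use nonempty FB(3) in auto)
      also have "R\<^sup>2 \<le> 4 / \<gamma>d\<^sup>2 * (?fstar - b \<bullet> y)\<^sup>2"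
        unfolding R_def using gamma by (simp add: power_divide field_simps)
      finally show ?thesis .
    qed
    show "G_norm_primal A (hess F x1) (inv (hess f y) (grad f y)) \<le> 2 * sqrt \<nu> / \<gamma>d * (?fstar - b \<bullet> y)"
    proof -
      have "G_norm_primal A (hess F x1) (inv (hess f y) (grad f y)) = qn G (inv M (A ?x))"
        unfolding Gn hfy gradf[OF y] ..
      also have "\<dots> \<le> R * sqrt (A ?x \<bullet> inv M (A ?x))" by (rule FB(2))
      also have "\<dots> \<le> R * sqrt \<nu>"
        using nb.nu_bound[OF xU A] R0 unfolding M_def by (intro mult_left_mono) auto
      also have "\<dots> \<le> 2 * sqrt \<nu> / \<gamma>d * (?fstar - b \<bullet> y)"
        unfolding R_def using gamma fnn[OF yQ] nb.nu_pos by (simp add: field_simps)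
      finally show ?thesis .
    qed
  qed
qed


end
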